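(* Let $G$ be a connected chordal graph which is not an atom (i.e. has at least one clique separator). If $G$ is a path graph, then for each clique separator $Q$ of $G$ the $Q$-attachedness graph of $G$ has no full antipodal triangle and contains no subgraph isomorphic (as a 2-edge-colored graph) to any graph in $\mathcal F_0$.
   Context: Graphs are finite and simple. A graph is a path graph if there are a tree $T$ and a bijection from its vertices to a collection of paths of $T$ such that two vertices are adjacent iff the vertex sets of the corresponding paths intersect. Chordal: no induced cycle of length $\ge4$. A clique is an inclusion-maximal set of pairwise adjacent vertices. A clique $Q$ of $G$ is a clique separator if $G-Q$ has at least two connected components; if their vertex sets are $V_1,\dots,V_s$, put $\gamma_i=G[V_i\cup Q]$ and $\Gamma_Q=\{\gamma_1,\dots,\gamma_s\}$. A relevant clique of $\gamma\in\Gamma_Q$ is a clique $K$ of the graph $\gamma$ with $K\cap Q\neq\emptyset$ and $K\neq Q$. An element $\gamma$ is a neighboring subgraph of a vertex $v$ if $v$ belongs to some relevant clique of $\gamma$; a set $W\subseteq\Gamma_Q$ is neighboring if there is $v\in Q$ such that every member of $W$ is a neighboring subgraph of $v$. Relations on $\Gamma_Q$: attachedness $\gamma\bowtie\gamma'$ iff there are relevant cliques $K$ of $\gamma$ and $K'$ of $\gamma'$ with $K\cap K'\cap Q\neq\emptyset$; dominance $\gamma\le\gamma'$ iff $\gamma\bowtie\gamma'$ and, for each relevant clique $K'$ of $\gamma'$, either $K\cap Q\subseteq K'\cap Q$ for every relevant clique $K$ of $\gamma$, or $K\cap K'\cap Q=\emptyset$ for every relevant clique $K$ of $\gamma$; antipodality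 $\gamma\leftrightarrow\gamma'$ iff there are relevant cliques $K$ of $\gamma$ and $K'$ of $\gamma'$ with $K\cap K'\cap Q\neq\emptyset$ and $K\cap Q$, $K'\cap Q$ inclusion-wise incomparable. By standing convention, elements $\gamma,\gamma'$ with $\gamma\le\gamma'$ and $\gamma'\le\gamma$ are identified, so $\le$ is a partial order. The $Q$-attachedness graph has vertex set $\Gamma_Q$ and an edge $\gamma\gamma'$ for each pair of distinct attached elements, colored antipodal if $\gamma\leftrightarrow\gamma'$ and dominance otherwise. A triangle is full if its vertex set is a neighboring set; a full antipodal triangle is a full triangle with all edges antipodal. 2-edge-colored graphs: $W^{(0)}_{2k+1}$ ($k\ge1$): hub $c$, rim $x_1,\dots,x_{2k+1}$, rim edges $x_ix_{i+1}$ (indices mod $2k+1$) antipodal, all spokes $cx_i$ dominance. $W^{(1)}_{2k+1}$ ($k\ge1$): same, except the spoke $cx_1$ is antipodal. $F_{2n+1}$ ($n\ge2$): vertices $c,x_1,\dots,x_{2n}$, edges $x_ix_{i+1}$ ($1\le i\le 2n-1$), $cx_1$, $cx_{2n}$ antipodal and $cx_i$ ($2\le i\le 2n-1$) dominance. $\mathcal F_0=\{W^{(0)}_{2k+1},W^{(1)}_{2k+1},F_{2n+1}: k\ge1,n\ge2\}$. A subgraph isomorphic to $F$ means an injective map of $V(F)$ into the vertex set sending each edge of $F$ to an edge of the same color. *)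

theory Defs
  imports Main
begin

definition graph :: "'a set \<Rightarrow> ('a \<Rightarrow> 'a \<Rightarrow> bool) \<Rightarrow> bool" where
  "graph V E \<longleftrightarrow> finite V \<and> (\<forall>u v. E u v \<longrightarrow> E v u) \<and> (\<forall>v. \<not> E v v)
     \<and> (\<forall>u v. E u v \<longrightarrow> u \<in> V \<and> v \<in> V)"

definition reach :: "'a set \<Rightarrow> ('a \<Rightarrow> 'a \<Rightarrow> bool) \<Rightarrow> 'a \<Rightarrow> 'a \<Rightarrow> bool" where
  "reach S E = (\<lambda>a b. E a b \<and> a \<in> S \<and> b \<in> S)\<^sup>*\<^sup>*"

definition connected_graph :: "'a set \<Rightarrow> ('a \<Rightarrow> 'a \<Rightarrow> bool) \<Rightarrow> bool" where
  "connected_graph V E \<longleftrightarrow> (\<forall>u\<in>V. \<forall>v\<in>V. reach V E u v)"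

definition comps :: "'a set \<Rightarrow> ('a \<Rightarrow> 'a \<Rightarrow> bool) \<Rightarrow> 'a set set" where
  "comps S E = {{y \<in> S. reach S E x y} | x. x \<in> S}"

text \<open>Chordal: no induced cycle of length at least 4.\<close>
definition chordal :: "'a set \<Rightarrow> ('a \<Rightarrow> 'a \<Rightarrow> bool) \<Rightarrow> bool" where
  "chordal V E \<longleftrightarrow> \<not> (\<exists>xs. length xs \<ge> 4 \<and> distinct xs \<and> set xs \<subseteq> V \<and>
      (\<forall>i<length xs. \<forall>j<length xs. i \<noteq> j \<longrightarrow>
          (E (xs ! i) (xs ! j) \<longleftrightarrow> j = Suc i mod length xs \<or> i = Suc j mod length xs)))"

definition complete_set :: "'a set \<Rightarrow> ('a \<Rightarrow> 'a \<Rightarrow> bool) \<Rightarrow> 'a set \<Rightarrow> bool" where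
  "complete_set V E K \<longleftrightarrow> K \<subseteq> V \<and> (\<forall>u\<in>K. \<forall>v\<in>K. u \<noteq> v \<longrightarrow> E u v)"

definition clique :: "'a set \<Rightarrow> ('a \<Rightarrow> 'a \<Rightarrow> bool) \<Rightarrow> 'a set \<Rightarrow> bool" where
  "clique V E K \<longleftrightarrow> complete_set V E K \<and> (\<forall>K'. complete_set V E K' \<and> K \<subseteq> K' \<longrightarrow> K' = K)"

definition clique_separator :: "'a set \<Rightarrow> ('a \<Rightarrow> 'a \<Rightarrow> bool) \<Rightarrow> 'a set \<Rightarrow> bool" where
  "clique_separator V E Q \<longleftrightarrow> clique V E Q \<and> card (comps (V - Q) E) \<ge> 2"

definition is_cycle :: "'b set \<Rightarrow> ('b \<Rightarrow> 'b \<Rightarrow> bool) \<Rightarrow> 'b list \<Rightarrow> bool" where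
  "is_cycle V E xs \<longleftrightarrow> length xs \<ge> 3 \<and> distinct xs \<and> set xs \<subseteq> V \<and>
     successively E xs \<and> E (last xs) (hd xs)"

definition tree :: "'b set \<Rightarrow> ('b \<Rightarrow> 'b \<Rightarrow> bool) \<Rightarrow> bool" where
  "tree V E \<longleftrightarrow> graph V E \<and> V \<noteq> {} \<and> connected_graph V E \<and> \<not> (\<exists>xs. is_cycle V E xs)"

definition is_path_set :: "'b set \<Rightarrow> ('b \<Rightarrow> 'b \<Rightarrow> bool) \<Rightarrow> 'b set \<Rightarrow> bool" where
  "is_path_set V E P \<longleftrightarrow> (\<exists>xs. xs \<noteq> [] \<and> distinct xs \<and> set xs \<subseteq> V \<and> successively E xs \<and> P = set xs)"

text \<open>Path graph: intersection graph of paths of a tree (the tree's vertices are taken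
  from nat, which is no loss of generality for finite trees).\<close>
definition path_graph :: "'a set \<Rightarrow> ('a \<Rightarrow> 'a \<Rightarrow> bool) \<Rightarrow> bool" where
  "path_graph V E \<longleftrightarrow> (\<exists>(TV :: nat set) TE f. tree TV TE \<and> inj_on f V \<and>
      (\<forall>v\<in>V. is_path_set TV TE (f v)) \<and>
      (\<forall>u\<in>V. \<forall>v\<in>V. u \<noteq> v \<longrightarrow> (E u v \<longleftrightarrow> f u \<inter> f v \<noteq> {})))"

text \<open>Elements gamma_i = G[V_i \<union> Q] are induced subgraphs, represented by their vertex sets.\<close>
definition Gamma :: "'a set \<Rightarrow> ('a \<Rightarrow> 'a \<Rightarrow> bool) \<Rightarrow> 'a set \<Rightarrow> 'a set set" where
  "Gamma V E Q = {C \<union> Q | C. C \<in> comps (V - Q) E}"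

definition relevant :: "('a \<Rightarrow> 'a \<Rightarrow> bool) \<Rightarrow> 'a set \<Rightarrow> 'a set \<Rightarrow> 'a set \<Rightarrow> bool" where
  "relevant E Q g K \<longleftrightarrow> clique g E K \<and> K \<inter> Q \<noteq> {} \<and> K \<noteq> Q"

definition neighboring_sub :: "('a \<Rightarrow> 'a \<Rightarrow> bool) \<Rightarrow> 'a set \<Rightarrow> 'a set \<Rightarrow> 'a \<Rightarrow> bool" where
  "neighboring_sub E Q g v \<longleftrightarrow> (\<exists>K. relevant E Q g K \<and> v \<in> K)"

definition attached :: "('a \<Rightarrow> 'a \<Rightarrow> bool) \<Rightarrow> 'a set \<Rightarrow> 'a set \<Rightarrow> 'a set \<Rightarrow> bool" where
  "attached E Q g g' \<longleftrightarrow> (\<exists>K K'. relevant E Q g K \<and> relevant E Q g' K' \<and> K \<inter> K' \<inter> Q \<noteq> {})"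

definition dominated :: "('a \<Rightarrow> 'a \<Rightarrow> bool) \<Rightarrow> 'a set \<Rightarrow> 'a set \<Rightarrow> 'a set \<Rightarrow> bool" where
  "dominated E Q g g' \<longleftrightarrow> attached E Q g g' \<and>
     (\<forall>K'. relevant E Q g' K' \<longrightarrow>
        (\<forall>K. relevant E Q g K \<longrightarrow> K \<inter> Q \<subseteq> K' \<inter> Q) \<or>
        (\<forall>K. relevant E Q g K \<longrightarrow> K \<inter> K' \<inter> Q = {}))"

definition antipodal :: "('a \<Rightarrow> 'a \<Rightarrow> bool) \<Rightarrow> 'a set \<Rightarrow> 'a set \<Rightarrow> 'a set \<Rightarrow> bool" where
  "antipodal E Q g g' \<longleftrightarrow> (\<exists>K K'. relevant E Q g K \<and> relevant E Q g' K' \<and> K \<inter> K' \<inter> Q \<noteq> {}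
      \<and> \<not> (K \<inter> Q \<subseteq> K' \<inter> Q) \<and> \<not> (K' \<inter> Q \<subseteq> K \<inter> Q))"

text \<open>Elements with g \<le> g' and g' \<le> g are identified: we pass to the classes of the
  equivalence relation generated by mutual dominance.\<close>
definition identified :: "('a \<Rightarrow> 'a \<Rightarrow> bool) \<Rightarrow> 'a set \<Rightarrow> 'a set set \<Rightarrow> 'a set \<Rightarrow> 'a set \<Rightarrow> bool" where
  "identified E Q \<Gamma> = (\<lambda>g g'. g \<in> \<Gamma> \<and> g' \<in> \<Gamma> \<and> dominated E Q g g' \<and> dominated E Q g' g)\<^sup>*\<^sup>*"

definition att_vertices :: "'a set \<Rightarrow> ('a \<Rightarrow> 'a \<Rightarrow> bool) \<Rightarrow> 'a set \<Rightarrow> 'a set set set" where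
  "att_vertices V E Q = {{g' \<in> Gamma V E Q. identified E Q (Gamma V E Q) g g'} | g. g \<in> Gamma V E Q}"

datatype ecolor = Antipodal | Dominance

definition att_edge :: "'a set \<Rightarrow> ('a \<Rightarrow> 'a \<Rightarrow> bool) \<Rightarrow> 'a set \<Rightarrow> 'a set set \<Rightarrow> 'a set set \<Rightarrow> ecolor \<Rightarrow> bool" where
  "att_edge V E Q X Y c \<longleftrightarrow> X \<in> att_vertices V E Q \<and> Y \<in> att_vertices V E Q \<and> X \<noteq> Y \<and>
     (\<exists>g\<in>X. \<exists>g'\<in>Y. attached E Q g g') \<and>
     (c = Antipodal \<longleftrightarrow> (\<exists>g\<in>X. \<exists>g'\<in>Y. antipodal E Q g g'))"

definition neighboring_set :: "('a \<Rightarrow> 'a \<Rightarrow> bool) \<Rightarrow> 'a set \<Rightarrow> 'a set set set \<Rightarrow> bool" where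
  "neighboring_set E Q W \<longleftrightarrow> (\<exists>v\<in>Q. \<forall>X\<in>W. \<exists>g\<in>X. neighboring_sub E Q g v)"

definition has_full_antipodal_triangle :: "'a set \<Rightarrow> ('a \<Rightarrow> 'a \<Rightarrow> bool) \<Rightarrow> 'a set \<Rightarrow> bool" where
  "has_full_antipodal_triangle V E Q \<longleftrightarrow> (\<exists>X Y Z.
      att_edge V E Q X Y Antipodal \<and> att_edge V E Q Y Z Antipodal \<and> att_edge V E Q X Z Antipodal \<and>
      neighboring_set E Q {X, Y, Z})"

type_synonym cgraph = "nat set \<times> (nat \<times> nat \<times> ecolor) set"

text \<open>W^(0)_{2k+1}: hub 0, rim 1..2k+1.\<close>
definition W0 :: "nat \<Rightarrow> cgraph" where
  "W0 k = ({0..2*k+1},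
     {(i, i mod (2*k+1) + 1, Antipodal) | i. 1 \<le> i \<and> i \<le> 2*k+1} \<union>
     {(0, i, Dominance) | i. 1 \<le> i \<and> i \<le> 2*k+1})"

definition W1 :: "nat \<Rightarrow> cgraph" where
  "W1 k = ({0..2*k+1},
     {(i, i mod (2*k+1) + 1, Antipodal) | i. 1 \<le> i \<and> i \<le> 2*k+1} \<union>
     {(0, 1, Antipodal)} \<union>
     {(0, i, Dominance) | i. 2 \<le> i \<and> i \<le> 2*k+1})"

text \<open>F_{2n+1}: c = 0, x_1..x_{2n} = 1..2n.\<close>
definition Ffan :: "nat \<Rightarrow> cgraph" where
  "Ffan n = ({0..2*n},
     {(i, i+1, Antipodal) | i. 1 \<le> i \<and> i \<le> 2*n - 1} \<union>
     {(0, 1, Antipodal), (0, 2*n, Antipodal)} \<union>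
     {(0, i, Dominance) | i. 2 \<le> i \<and> i \<le> 2*n - 1})"

definition F0 :: "cgraph set" where
  "F0 = {W0 k | k. k \<ge> 1} \<union> {W1 k | k. k \<ge> 1} \<union> {Ffan n | n. n \<ge> 2}"

definition contains_colored_subgraph :: "'a set \<Rightarrow> ('a \<Rightarrow> 'a \<Rightarrow> bool) \<Rightarrow> 'a set \<Rightarrow> cgraph \<Rightarrow> bool" where
  "contains_colored_subgraph V E Q F \<longleftrightarrow> (\<exists>\<phi>. inj_on \<phi> (fst F) \<and> \<phi> ` fst F \<subseteq> att_vertices V E Q \<and>
      (\<forall>(u, v, c) \<in> snd F. att_edge V E Q (\<phi> u) (\<phi> v) c))"

end

theory Submission
  imports Defs
begin

lemma reach_mono:
  assumes "S \<subseteq> S'" "reach S E x y" shows "reach S' E x y"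
  using assms(2) unfolding reach_def
proof (induction rule: rtranclp_induct)
  case base then show ?case by simp
next
  case (step y z) then show ?case using assms(1) by (simp add: rtranclp.rtrancl_into_rtrancl subset_iff)
qed

lemma reach_sym:
  assumes "\<forall>u v. E u v \<longrightarrow> E v u" "reach S E x y" shows "reach S E y x"
  using assms(2) unfolding reach_def
proof (induction rule: rtranclp_induct)
  case base then show ?case by simp
next
  case (step y z)
  have "(\<lambda>a b. E a b \<and> a \<in> S \<and> b \<in> S) z y" using step assms(1) by blast
  then show ?case using step(3) by (rule converse_rtranclp_into_rtranclp)
qed

lemma reach_trans: "reach S E x y \<Longrightarrow> reach S E y z \<Longrightarrow> reach S E x z"
  unfolding reach_def by (rule rtranclp_trans)

lemma reach_step: "E x y \<Longrightarrow> x \<in> S \<Longrightarrow> y \<in> S \<Longrightarrow> reach S E x y"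
  unfolding reach_def by auto

lemma reach_refl: "reach S E x x"
  unfolding reach_def by auto

lemma path_reach:
  "successively E xs \<Longrightarrow> set xs \<subseteq> S \<Longrightarrow> xs \<noteq> [] \<Longrightarrow> y \<in> set xs \<Longrightarrow> reach S E (hd xs) y"
proof (induction xs)
  case Nil then show ?case by simp
next
  case (Cons x xs)
  show ?case
  proof (cases "y = x")
    case True then show ?thesis by (simp add: reach_refl)
  next
    case False
    then have xs: "xs \<noteq> []" "y \<in> set xs" using Cons by auto
    then have "E x (hd xs)" "successively E xs" using Cons(2) by (auto simp: successively_Cons)
    moreover have "hd xs \<in> S" using Cons(3) xs by (cases xs) auto
    ultimately have "reach S E x (hd xs)" using Cons(3) by (auto intro: reach_step)
    moreover have "reach S E (hd xs) y" using Cons xs \<open>successively E xs\<close> by auto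
    ultimately show ?thesis by (auto intro: reach_trans)
  qed
qed

lemma walk_path:
  assumes "reach S E x y" "x \<in> S"
  shows "\<exists>p. p \<noteq> [] \<and> distinct p \<and> set p \<subseteq> S \<and> successively E p \<and> hd p = x \<and> last p = y"
  using assms unfolding reach_def
proof (induction rule: rtranclp_induct)
  case base then show ?case by (intro exI[of _ "[x]"]) auto
next
  case (step y z)
  then obtain p where p: "p \<noteq> []" "distinct p" "set p \<subseteq> S" "successively E p" "hd p = x" "last p = y"
    by auto
  show ?case
  proof (cases "z \<in> set p")
    case True
    then obtain p1 p2 where pp: "p = p1 @ z # p2" by (meson split_list)
    have "successively E (p1 @ [z])" using p(4) unfolding pp
      by (simp add: successively_append_iff successively_Cons)
    moreover have "hd (p1 @ [z]) = x" using p(5) pp by (cases p1) auto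
    ultimately show ?thesis using p pp by (intro exI[of _ "p1 @ [z]"]) auto
  next
    case False
    have "successively E (p @ [z])" using p step(2)
      by (simp add: successively_append_iff)
    then show ?thesis using p False step(2) by (intro exI[of _ "p @ [z]"]) auto
  qed
qed

locale tr =
  fixes TV :: "'b set" and TE :: "'b \<Rightarrow> 'b \<Rightarrow> bool"
  assumes tree: "tree TV TE"
begin

lemma sym: "TE u v \<Longrightarrow> TE v u"
  using tree unfolding tree_def graph_def by blast

lemma inV: "TE u v \<Longrightarrow> u \<in> TV \<and> v \<in> TV"
  using tree unfolding tree_def graph_def by blast

lemma nocyc: "\<not> is_cycle TV TE xs"
  using tree unfolding tree_def by blast

lemma connT: "x \<in> TV \<Longrightarrow> y \<in> TV \<Longrightarrow> reach TV TE x y"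
  using tree unfolding tree_def connected_graph_def by blast

lemma finTV: "finite TV"
  using tree unfolding tree_def graph_def by blast

definition pl :: "'b list \<Rightarrow> bool" where
  "pl xs \<longleftrightarrow> xs \<noteq> [] \<and> distinct xs \<and> set xs \<subseteq> TV \<and> successively TE xs"

lemma pl_rev: "pl xs \<Longrightarrow> pl (rev xs)"
  unfolding pl_def by (auto intro: successively_mono sym)

lemma pl_infix: "pl (a @ b @ c) \<Longrightarrow> b \<noteq> [] \<Longrightarrow> pl b"
  unfolding pl_def by (auto simp: successively_append_iff)

lemma pl_single: "x \<in> TV \<Longrightarrow> pl [x]"
  unfolding pl_def by auto

lemma walk_pl: "reach S TE x y \<Longrightarrow> x \<in> S \<Longrightarrow> S \<subseteq> TV \<Longrightarrow>
   \<exists>p. pl p \<and> set p \<subseteq> S \<and> hd p = x \<and> last p = y"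
  using walk_path[of S TE x y] unfolding pl_def by blast

lemma uniq: "pl xs \<Longrightarrow> pl ys \<Longrightarrow> hd xs = hd ys \<Longrightarrow> last xs = last ys \<Longrightarrow> xs = ys"
proof (induction xs arbitrary: ys)
  case Nil then show ?case by (simp add: pl_def)
next
  case (Cons x xs)
  obtain ys' where ys: "ys = x # ys'" using Cons(3,4) by (cases ys) (auto simp: pl_def)
  show ?case
  proof (cases "xs = []")
    case True
    show ?thesis
    proof (rule ccontr)
      assume "x # xs \<noteq> ys"
      then have "ys' \<noteq> []" using True ys by auto
      then have "last ys \<in> set ys'" using ys by auto
      moreover have "last ys = x" using Cons(5) True by simp
      ultimately show False using Cons(3) ys by (auto simp: pl_def)
    qed
  next
    case False
    have ys'ne: "ys' \<noteq> []"
    proof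
      assume "ys' = []"
      then have "last xs = x" using Cons(5) ys False by simp
      then show False using False Cons(2) by (auto simp: pl_def)
    qed
    have plxs: "pl xs" using Cons(2) False unfolding pl_def by (auto simp: successively_Cons)
    have plys': "pl ys'" using Cons(3) ys ys'ne unfolding pl_def by (auto simp: successively_Cons)
    have lasteq: "last xs = last ys'" using Cons(5) ys False ys'ne by simp
    show ?thesis
    proof (cases "hd xs = hd ys'")
      case True
      then show ?thesis using Cons.IH[OF plxs plys' True lasteq] ys by simp
    next
      case hdne: False
      have "\<exists>v\<in>set xs. v \<in> set ys'" using lasteq False ys'ne by (metis last_in_set)
      then obtain zs1 m zs2 where xsp: "xs = zs1 @ m # zs2" and m: "m \<in> set ys'"
        and zs1: "\<forall>v\<in>set zs1. v \<notin> set ys'"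
        by (rule split_list_first_propE)
      obtain ws1 ws2 where ysp: "ys' = ws1 @ m # ws2" using m by (meson split_list)
      define cyc where "cyc = (x # zs1 @ [m]) @ rev ws1"
      have d1: "distinct (x # xs)" "distinct (x # ys')" using Cons(2,3) ys by (auto simp: pl_def)
      have s1: "successively TE (x # xs)" "successively TE (x # ys')" using Cons(2,3) ys by (auto simp: pl_def)
      have len: "length cyc \<ge> 3"
      proof -
        have "zs1 \<noteq> [] \<or> ws1 \<noteq> []"
          using hdne xsp ysp by auto
        then show ?thesis unfolding cyc_def by (cases zs1; cases ws1) auto
      qed
      have dist: "distinct cyc"
        using d1 zs1 unfolding cyc_def xsp ysp by auto
      have sv: "set cyc \<subseteq> TV"
        using Cons(2,3) ys unfolding cyc_def xsp ysp pl_def by auto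
      have sA: "successively TE (x # zs1 @ [m])"
        using s1(1) unfolding xsp
        by (metis append_Cons append_Cons append_assoc append_Nil successively_append_iff)
      have sB: "successively TE (ws1 @ [m])"
        using s1(2) unfolding ysp
        by (metis append_Cons append_assoc append_Nil successively_append_iff)
      have sBr: "successively TE (rev ws1)"
        using sB by (auto simp: successively_append_iff intro: successively_mono sym)
      have junc: "ws1 \<noteq> [] \<Longrightarrow> TE m (hd (rev ws1))"
        using sB by (auto simp: successively_append_iff hd_rev intro: sym)
      have sc: "successively TE cyc"
        unfolding cyc_def using successively_append_iff[of TE "x # zs1 @ [m]" "rev ws1"] sA sBr junc
        by (auto simp del: successively_rev simp: last_rev)
      have "hd ys' = (if ws1 = [] then m else hd ws1)" using ysp by (cases ws1) auto
      then have lc: "last cyc = hd ys'" unfolding cyc_def by (auto simp: last_rev)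
      have "TE x (hd ys')" using s1(2) ys'ne by (cases ys') auto
      then have "TE (last cyc) (hd cyc)" using lc by (simp add: cyc_def sym)
      then have "is_cycle TV TE cyc" using len dist sv sc unfolding is_cycle_def by auto
      then show ?thesis using nocyc by blast
    qed
  qed
qed

end

context tr
begin

lemma pl_hd_in: "pl xs \<Longrightarrow> hd xs \<in> TV" unfolding pl_def by (cases xs) auto

lemma cvx:
  assumes ps: "pl ps" and x: "x \<in> set ps" and y: "y \<in> set ps"
    and R: "pl R" "hd R = x" "last R = y"
  shows "set R \<subseteq> set ps"
proof -
  obtain A B where psp: "ps = A @ x # B" using x by (meson split_list)
  have dps: "distinct ps" using ps by (simp add: pl_def)
  have "y \<in> set A \<or> y = x \<or> y \<in> set B" using y psp by auto
  then consider "y = x" | "y \<in> set B" | "y \<in> set A" by blast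
  then show ?thesis
  proof cases
    case 1
    have xT: "x \<in> TV" using ps x by (auto simp: pl_def)
    have "R = [x]" using uniq[OF R(1) pl_single[OF xT]] R 1 by simp
    then show ?thesis using x by simp
  next
    case 2
    then obtain B1 B2 where Bp: "B = B1 @ y # B2" by (meson split_list)
    have "ps = A @ (x # B1 @ [y]) @ B2" using psp Bp by simp
    then have "pl (x # B1 @ [y])" using pl_infix ps by (metis list.simps(3))
    then have "R = x # B1 @ [y]" using uniq[OF R(1)] R by simp
    then show ?thesis using psp Bp by auto
  next
    case 3
    then obtain A1 A2 where Ap: "A = A1 @ y # A2" by (meson split_list)
    have "ps = A1 @ (y # A2 @ [x]) @ B" using psp Ap by simp
    then have "pl (y # A2 @ [x])" using pl_infix ps by (metis list.simps(3))
    then have "pl (rev (y # A2 @ [x]))" by (rule pl_rev)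
    then have "R = rev (y # A2 @ [x])" using uniq[OF R(1)] R by (simp add: hd_rev last_rev)
    then show ?thesis using psp Ap by auto
  qed
qed

definition cvxs :: "'b set \<Rightarrow> bool" where
  "cvxs S \<longleftrightarrow> S \<subseteq> TV \<and> (\<forall>R. pl R \<longrightarrow> hd R \<in> S \<longrightarrow> last R \<in> S \<longrightarrow> set R \<subseteq> S)"

lemma cvxs_path: "pl ps \<Longrightarrow> cvxs (set ps)"
  unfolding cvxs_def using cvx by (auto simp: pl_def)

lemma cvxs_int: "cvxs A \<Longrightarrow> cvxs B \<Longrightarrow> cvxs (A \<inter> B)"
  unfolding cvxs_def by blast

lemma path_between: "x \<in> TV \<Longrightarrow> y \<in> TV \<Longrightarrow> \<exists>p. pl p \<and> hd p = x \<and> last p = y"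
  using walk_pl[OF connT] by blast

lemma helly3:
  assumes cA: "cvxs A" and cB: "cvxs B" and cC: "cvxs C"
    and a: "a \<in> B" "a \<in> C" and b: "b \<in> A" "b \<in> C" and c: "c \<in> A" "c \<in> B"
  shows "A \<inter> B \<inter> C \<noteq> {}"
proof -
  have aT: "a \<in> TV" and bT: "b \<in> TV" and cT: "c \<in> TV" using a b c cA cB unfolding cvxs_def by auto
  obtain p where p: "pl p" "hd p = a" "last p = b" using path_between aT bT by blast
  obtain r where r: "pl r" "hd r = a" "last r = c" using path_between aT cT by blast
  have "\<exists>v\<in>set p. v \<in> set r" using p r by (metis hd_in_set pl_def)
  then obtain p1 m p2 where pp: "p = p1 @ m # p2" and m: "m \<in> set r" and p2: "\<forall>z\<in>set p2. z \<notin> set r"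
    by (rule split_list_last_propE)
  obtain r1 r2 where rp: "r = r1 @ m # r2" using m by (meson split_list)
  define L where "L = rev (m # p2) @ r2"
  have pl1: "pl (m # p2)" using p(1) pp pl_infix[of p1 "m # p2" "[]"] by simp
  have pl2: "pl (m # r2)" using r(1) rp pl_infix[of r1 "m # r2" "[]"] by simp
  have plL: "pl L"
  proof -
    have d: "distinct L" using pl1 pl2 p2 rp unfolding L_def pl_def by auto
    have st: "set L \<subseteq> TV" using pl1 pl2 unfolding L_def pl_def by auto
    have s1: "successively TE (rev (m # p2))" using pl_rev[OF pl1] by (simp add: pl_def)
    have s2: "successively TE (m # r2)" using pl2 by (simp add: pl_def)
    then have s2': "successively TE r2" and j: "r2 \<noteq> [] \<Longrightarrow> TE m (hd r2)"
      by (auto simp: successively_Cons)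
    have "successively TE L" unfolding L_def
      using successively_append_iff[of TE "rev (m # p2)" r2] s1 s2' j
      by (auto simp del: successively_rev)
    then show ?thesis using d st unfolding pl_def L_def by auto
  qed
  have hL: "hd L = b"
  proof -
    have "last (m # p2) = b" using p(3) pp by simp
    then show ?thesis unfolding L_def by (cases p2) (auto simp: hd_rev)
  qed
  have lL: "last L = c"
  proof -
    have "last (m # r2) = c" using r(3) rp by simp
    then show ?thesis unfolding L_def by (cases r2) (auto simp: last_rev)
  qed
  have "m \<in> set L" unfolding L_def by simp
  then have "m \<in> A" using cA plL hL lL b c unfolding cvxs_def by blast
  moreover have "m \<in> C" using cC p a b pp unfolding cvxs_def by auto
  moreover have "m \<in> B" using cB r a c m unfolding cvxs_def by auto
  ultimately show ?thesis by blast
qed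

lemma helly:
  "finite F \<Longrightarrow> F \<noteq> {} \<Longrightarrow> \<forall>A\<in>F. cvxs A \<Longrightarrow> \<forall>A\<in>F. \<forall>B\<in>F. A \<inter> B \<noteq> {} \<Longrightarrow> \<Inter>F \<noteq> {}"
proof (induction "card F" arbitrary: F rule: less_induct)
  case less
  obtain A where A: "A \<in> F" using less(3) by blast
  show ?case
  proof (cases "F = {A}")
    case True then show ?thesis using less(5) A by auto
  next
    case False
    define F' where "F' = F - {A}"
    have F'ne: "F' \<noteq> {}" using False A F'_def by auto
    define G where "G = (\<lambda>B. A \<inter> B) ` F'"
    have "card G \<le> card F'" unfolding G_def using less(2) F'_def by (simp add: card_image_le)
    also have "card F' < card F" unfolding F'_def using less(2) A by (meson card_Diff1_less)
    finally have "card G < card F" .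
    moreover have "finite G" "G \<noteq> {}" using less(2) F'ne unfolding G_def F'_def by auto
    moreover have "\<forall>X\<in>G. cvxs X" unfolding G_def F'_def using less(4) A cvxs_int by auto
    moreover have "\<forall>X\<in>G. \<forall>Y\<in>G. X \<inter> Y \<noteq> {}"
    proof (intro ballI)
      fix X Y assume "X \<in> G" "Y \<in> G"
      then obtain B B' where B: "B \<in> F" "B' \<in> F" "X = A \<inter> B" "Y = A \<inter> B'"
        unfolding G_def F'_def by auto
      obtain a where "a \<in> B \<inter> B'" using less(5) B by blast
      moreover obtain b where "b \<in> A \<inter> B'" using less(5) B A by blast
      moreover obtain c where "c \<in> A \<inter> B" using less(5) B A by blast
      ultimately have "A \<inter> B \<inter> B' \<noteq> {}" using helly3[of A B B'] less(4) A B by blast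
      then show "X \<inter> Y \<noteq> {}" using B by blast
    qed
    ultimately have "\<Inter>G \<noteq> {}" using less(1) by blast
    then obtain x where x: "x \<in> \<Inter>G" by blast
    have "x \<in> A" using x F'ne unfolding G_def by auto
    moreover have "\<forall>B\<in>F'. x \<in> B" using x unfolding G_def by blast
    ultimately show ?thesis unfolding F'_def by blast
  qed
qed

end

context tr
begin

lemma symall: "\<forall>u v. TE u v \<longrightarrow> TE v u" using sym by blast

lemma top:
  assumes S: "S \<subseteq> TV" "t0 \<in> TV" "t0 \<notin> S" "S \<noteq> {}" "\<forall>x\<in>S. \<forall>y\<in>S. reach S TE x y"
  shows "\<exists>u\<in>S. \<forall>ps. pl ps \<longrightarrow> t0 \<in> set ps \<longrightarrow> set ps \<inter> S \<noteq> {} \<longrightarrow> u \<in> set ps"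
proof -
  obtain s0 where s0: "s0 \<in> S" using S by blast
  obtain p where p: "pl p" "hd p = t0" "last p = s0" using path_between S s0 by blast
  have "\<exists>v\<in>set p. v \<in> S" using p s0 by (metis last_in_set pl_def)
  then obtain p1 u p2 where pp: "p = p1 @ u # p2" and u: "u \<in> S" and p1: "\<forall>v\<in>set p1. v \<notin> S"
    by (rule split_list_first_propE)
  have p1ne: "p1 \<noteq> []" using pp p(2) u S(3) by (cases p1) auto
  have plp1: "pl (p1 @ [u])" using pl_infix[of "[]" "p1 @ [u]" p2] p(1) pp by simp
  show ?thesis
  proof (intro bexI[OF _ u] allI impI)
    fix ps assume ps: "pl ps" "t0 \<in> set ps" "set ps \<inter> S \<noteq> {}"
    then obtain s where s: "s \<in> set ps" "s \<in> S" by blast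
    obtain W where W: "pl W" "set W \<subseteq> S" "hd W = u" "last W = s"
      using walk_pl[of S u s] S(1,5) u s by blast
    define L where "L = p1 @ W"
    have "distinct L" using plp1 W p1 unfolding L_def pl_def by auto
    moreover have "set L \<subseteq> TV" using plp1 W unfolding L_def pl_def by auto
    moreover have "successively TE L"
    proof -
      have a: "successively TE p1" "TE (last p1) u" using plp1 p1ne
        by (auto simp: pl_def successively_append_iff)
      have "successively TE W" "W \<noteq> []" using W by (auto simp: pl_def)
      then show ?thesis unfolding L_def using a W(3) by (auto simp: successively_append_iff)
    qed
    ultimately have plL: "pl L" unfolding pl_def L_def using p1ne by simp
    have "hd L = t0" unfolding L_def using p1ne pp p(2) by simp
    moreover have "last L = s" unfolding L_def using W by (simp add: pl_def)
    ultimately have "set L \<subseteq> set ps" using cvx[OF ps(1) ps(2) s(1) plL] by blast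
    moreover have "u \<in> set L" unfolding L_def using W by (metis Un_iff hd_in_set pl_def set_append)
    ultimately show "u \<in> set ps" by blast
  qed
qed

end

context tr
begin

definition cls :: "'b \<Rightarrow> 'b \<Rightarrow> 'b set" where
  "cls t0 x = {y. reach (TV - {t0}) TE x y}"

lemma cls_eq: assumes r: "reach (TV - {t0}) TE x y" shows "cls t0 x = cls t0 y"
proof -
  have r': "reach (TV - {t0}) TE y x" using reach_sym[OF symall r] .
  have "\<And>z. reach (TV - {t0}) TE x z \<Longrightarrow> reach (TV - {t0}) TE y z"
    using reach_trans[OF r'] .
  moreover have "\<And>z. reach (TV - {t0}) TE y z \<Longrightarrow> reach (TV - {t0}) TE x z"
    using reach_trans[OF r] .
  ultimately show ?thesis unfolding cls_def by blast
qed

lemma cls_mem: "y \<in> cls t0 x \<Longrightarrow> reach (TV - {t0}) TE x y"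
  unfolding cls_def by simp

lemma cls_self: "x \<in> cls t0 x"
  unfolding cls_def by (simp add: reach_refl)

lemma opp_contra:
  assumes xs: "pl xs" "xs = A @ t0 # B" and u: "u \<in> set A" and u': "u' \<in> set B"
    and r: "reach (TV - {t0}) TE u u'"
  shows False
proof -
  obtain A1 A2 where Ap: "A = A1 @ u # A2" using u by (meson split_list)
  obtain B1 B2 where Bp: "B = B1 @ u' # B2" using u' by (meson split_list)
  have "xs = A1 @ (u # A2 @ t0 # B1 @ [u']) @ B2" using xs Ap Bp by simp
  then have plL: "pl (u # A2 @ t0 # B1 @ [u'])" using pl_infix xs(1) by (metis list.simps(3))
  have "u \<in> TV" "u \<noteq> t0" using xs Ap by (auto simp: pl_def)
  then obtain M where M: "pl M" "set M \<subseteq> TV - {t0}" "hd M = u" "last M = u'"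
    using walk_pl[OF r] by blast
  have "M = u # A2 @ t0 # B1 @ [u']" using uniq[OF M(1) plL] M by simp
  then show False using M(2) by auto
qed

lemma side_same:
  assumes xs: "pl xs" "xs = A @ t0 # B" and u: "u \<in> set B" and u': "u' \<in> set B"
  shows "(\<exists>R. pl R \<and> hd R = t0 \<and> last R = u \<and> u' \<in> set R) \<or>
         (\<exists>R. pl R \<and> hd R = t0 \<and> last R = u' \<and> u \<in> set R)"
proof -
  obtain B1 B2 where Bp: "B = B1 @ u # B2" using u by (meson split_list)
  show ?thesis
  proof (cases "u' \<in> set (B1 @ [u])")
    case True
    have "xs = A @ (t0 # B1 @ [u]) @ B2" using xs Bp by simp
    then have "pl (t0 # B1 @ [u])" using pl_infix xs(1) by (metis list.simps(3))
    then show ?thesis using True by (intro disjI1 exI[of _ "t0 # B1 @ [u]"]) auto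
  next
    case False
    then have "u' \<in> set B2" using u' Bp by auto
    then obtain B3 B4 where B2p: "B2 = B3 @ u' # B4" by (meson split_list)
    have "xs = A @ (t0 # B1 @ u # B3 @ [u']) @ B4" using xs Bp B2p by simp
    then have "pl (t0 # B1 @ u # B3 @ [u'])" using pl_infix xs(1) by (metis list.simps(3))
    then show ?thesis by (intro disjI2 exI[of _ "t0 # B1 @ u # B3 @ [u']"]) auto
  qed
qed

lemma side:
  assumes xs: "pl xs" and t: "t0 \<in> set xs" and u: "u \<in> set xs" "u \<noteq> t0"
    and u': "u' \<in> set xs" "u' \<noteq> t0" and r: "reach (TV - {t0}) TE u u'"
  shows "(\<exists>R. pl R \<and> hd R = t0 \<and> last R = u \<and> u' \<in> set R) \<or>
         (\<exists>R. pl R \<and> hd R = t0 \<and> last R = u' \<and> u \<in> set R)"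
proof -
  obtain A B where xsp: "xs = A @ t0 # B" using t by (meson split_list)
  have uu: "u \<in> set A \<or> u \<in> set B" "u' \<in> set A \<or> u' \<in> set B" using u u' xsp by auto
  have r': "reach (TV - {t0}) TE u' u" using reach_sym[OF symall r] .
  have rx: "pl (rev xs)" "rev xs = rev B @ t0 # rev A" using pl_rev[OF xs] xsp by auto
  show ?thesis
  proof (cases "u \<in> set B")
    case True
    show ?thesis
    proof (cases "u' \<in> set B")
      case True
      then show ?thesis using side_same[OF xs xsp] \<open>u \<in> set B\<close> by blast
    next
      case False
      then have "u' \<in> set A" using uu by blast
      then show ?thesis using opp_contra[OF xs xsp \<open>u' \<in> set A\<close> \<open>u \<in> set B\<close> r'] by blast
    qed
  next
    case False
    then have uA: "u \<in> set A" using uu by blast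
    show ?thesis
    proof (cases "u' \<in> set B")
      case True
      then show ?thesis using opp_contra[OF xs xsp uA \<open>u' \<in> set B\<close> r] by blast
    next
      case False
      then have "u' \<in> set A" using uu by blast
      then have "u' \<in> set (rev A)" "u \<in> set (rev A)" using uA by auto
      then show ?thesis using side_same[OF rx] by blast
    qed
  qed
qed

lemma cover2:
  assumes xs: "pl xs" and t: "t0 \<in> set xs"
  shows "finite (cls t0 ` (set xs - {t0})) \<and> card (cls t0 ` (set xs - {t0})) \<le> 2"
proof -
  obtain A B where xsp: "xs = A @ t0 # B" using t by (meson split_list)
  have dA: "set A \<subseteq> TV - {t0}" "set B \<subseteq> TV - {t0}" using xs xsp by (auto simp: pl_def)
  have sA: "successively TE A" "successively TE B" using xs xsp
    by (auto simp: pl_def successively_append_iff successively_Cons)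
  have "cls t0 ` (set xs - {t0}) \<subseteq> {cls t0 (hd A), cls t0 (hd B)}"
  proof
    fix z assume "z \<in> cls t0 ` (set xs - {t0})"
    then obtain y where y: "y \<in> set xs" "y \<noteq> t0" "z = cls t0 y" by blast
    then have "y \<in> set A \<or> y \<in> set B" using xsp by auto
    then show "z \<in> {cls t0 (hd A), cls t0 (hd B)}"
    proof
      assume "y \<in> set A"
      then have "reach (TV - {t0}) TE (hd A) y" using path_reach[OF sA(1) dA(1)] by (metis empty_iff list.set(1))
      then show ?thesis using y cls_eq by auto
    next
      assume "y \<in> set B"
      then have "reach (TV - {t0}) TE (hd B) y" using path_reach[OF sA(2) dA(2)] by (metis empty_iff list.set(1))
      then show ?thesis using y cls_eq by auto
    qed
  qed
  moreover have fin: "finite {cls t0 (hd A), cls t0 (hd B)}" by simp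
  moreover have "card {cls t0 (hd A), cls t0 (hd B)} \<le> 2" by (simp add: card_insert_if)
  ultimately show ?thesis using card_mono[OF fin] finite_subset[OF _ fin] by (meson le_trans)
qed

end

lemma alt_lemma:
  assumes "\<forall>i. a \<le> i \<longrightarrow> i < b \<longrightarrow> (s i \<longleftrightarrow> \<not> s (Suc i))"
  shows "a \<le> j \<Longrightarrow> j \<le> b \<Longrightarrow> (s j \<longleftrightarrow> (s a \<longleftrightarrow> even (j - a)))"
proof (induction j)
  case 0 then show ?case by simp
next
  case (Suc j)
  show ?case
  proof (cases "Suc j = a")
    case True then show ?thesis by simp
  next
    case False
    then have "a \<le> j" "j < b" using Suc by auto
    then have "s (Suc j) \<longleftrightarrow> \<not> s j" using assms by blast
    moreover have "Suc j - a = Suc (j - a)" using \<open>a \<le> j\<close> by simp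
    ultimately show ?thesis using Suc \<open>a \<le> j\<close> \<open>j < b\<close> by simp
  qed
qed

lemma attached_sym: "attached E Q g h \<Longrightarrow> attached E Q h g"
  unfolding attached_def by blast

lemma antipodal_sym: "antipodal E Q g h \<Longrightarrow> antipodal E Q h g"
  unfolding antipodal_def by blast

lemma att_edge_sym: "att_edge V E Q X Y c \<Longrightarrow> att_edge V E Q Y X c"
  unfolding att_edge_def using attached_sym antipodal_sym by metis

lemma att_edge_av: "att_edge V E Q X Y c \<Longrightarrow> X \<in> att_vertices V E Q \<and> Y \<in> att_vertices V E Q"
  unfolding att_edge_def by blast

lemma antip_pair: "att_edge V E Q X Y Antipodal \<Longrightarrow> \<exists>g\<in>X. \<exists>h\<in>Y. antipodal E Q g h"
  unfolding att_edge_def by blast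

lemma dom_pair: "att_edge V E Q X Y Dominance \<Longrightarrow> \<exists>g\<in>X. \<exists>h\<in>Y. attached E Q g h"
  unfolding att_edge_def by blast

lemma dom_nanti: "att_edge V E Q X Y Dominance \<Longrightarrow> g \<in> X \<Longrightarrow> h \<in> Y \<Longrightarrow> \<not> antipodal E Q g h"
  unfolding att_edge_def by blast

lemma av1: "att_edge V E Q X Y c \<Longrightarrow> X \<in> att_vertices V E Q"
  unfolding att_edge_def by blast

lemma av2: "att_edge V E Q X Y c \<Longrightarrow> Y \<in> att_vertices V E Q"
  unfolding att_edge_def by blast

locale absQ =
  fixes V :: "'a set" and E :: "'a \<Rightarrow> 'a \<Rightarrow> bool" and Q :: "'a set"
    and br :: "'a set \<Rightarrow> 'c" and cov :: "'a \<Rightarrow> 'c set"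
  assumes A2: "g \<in> Gamma V E Q \<Longrightarrow> relevant E Q g K \<Longrightarrow> q \<in> K \<Longrightarrow> q \<in> Q \<Longrightarrow> br g \<in> cov q"
    and A3: "g \<in> Gamma V E Q \<Longrightarrow> g' \<in> Gamma V E Q \<Longrightarrow> br g = br g' \<Longrightarrow> relevant E Q g K \<Longrightarrow>
       relevant E Q g' K' \<Longrightarrow> K \<inter> K' \<inter> Q \<noteq> {} \<Longrightarrow> K \<inter> Q \<subseteq> K' \<inter> Q \<or> K' \<inter> Q \<subseteq> K \<inter> Q"
    and A4: "g \<in> Gamma V E Q \<Longrightarrow> \<exists>K. relevant E Q g K \<and> (\<forall>K'. relevant E Q g K' \<longrightarrow> K' \<inter> Q \<subseteq> K \<inter> Q)"
    and A5: "q \<in> Q \<Longrightarrow> finite (cov q) \<and> card (cov q) \<le> 2"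
begin

abbreviation "\<Gamma> \<equiv> Gamma V E Q"

lemma three: "q \<in> Q \<Longrightarrow> a \<in> cov q \<Longrightarrow> b \<in> cov q \<Longrightarrow> c \<in> cov q \<Longrightarrow> a \<noteq> b \<Longrightarrow> a \<noteq> c \<Longrightarrow> b \<noteq> c \<Longrightarrow> False"
proof -
  assume h: "q \<in> Q" "a \<in> cov q" "b \<in> cov q" "c \<in> cov q" "a \<noteq> b" "a \<noteq> c" "b \<noteq> c"
  have "card {a, b, c} \<le> card (cov q)" using h A5[OF h(1)] by (intro card_mono) auto
  moreover have "card {a, b, c} = 3" using h by simp
  ultimately show False using A5[OF h(1)] by simp
qed

definition T :: "'a set \<Rightarrow> 'a set" where
  "T g = \<Union>{K \<inter> Q | K. relevant E Q g K}"

definition single :: "'a set \<Rightarrow> bool" where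
  "single g \<longleftrightarrow> (\<forall>K. relevant E Q g K \<longrightarrow> K \<inter> Q = T g)"

lemma T_sup: "relevant E Q g K \<Longrightarrow> K \<inter> Q \<subseteq> T g"
  unfolding T_def by blast

lemma T_rel: "g \<in> \<Gamma> \<Longrightarrow> \<exists>K. relevant E Q g K \<and> K \<inter> Q = T g"
proof -
  assume g: "g \<in> \<Gamma>"
  obtain K where K: "relevant E Q g K" "\<forall>K'. relevant E Q g K' \<longrightarrow> K' \<inter> Q \<subseteq> K \<inter> Q"
    using A4[OF g] by blast
  have "T g \<subseteq> K \<inter> Q" unfolding T_def using K(2) by blast
  then show ?thesis using K(1) T_sup[OF K(1)] by blast
qed

lemma T_ne: "g \<in> \<Gamma> \<Longrightarrow> T g \<noteq> {}"
  using T_rel unfolding relevant_def by fastforce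

lemma T_Q: "T g \<subseteq> Q"
  unfolding T_def by blast

lemma T_cov: "g \<in> \<Gamma> \<Longrightarrow> q \<in> T g \<Longrightarrow> br g \<in> cov q"
  unfolding T_def using A2 by blast

lemma dom_sub:
  assumes g: "g \<in> \<Gamma>" and h: "h \<in> \<Gamma>" and d: "dominated E Q g h"
  shows "T g \<subseteq> T h"
proof -
  obtain Kg where Kg: "relevant E Q g Kg" "Kg \<inter> Q = T g" using T_rel[OF g] by blast
  obtain Kh where Kh: "relevant E Q h Kh" "Kh \<inter> Q = T h" using T_rel[OF h] by blast
  obtain K1 K2 where K12: "relevant E Q g K1" "relevant E Q h K2" "K1 \<inter> K2 \<inter> Q \<noteq> {}"
    using d unfolding dominated_def attached_def by blast
  have "K2 \<inter> Q \<subseteq> Kh \<inter> Q" using T_sup[OF K12(2)] Kh by simp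
  then have "K1 \<inter> Kh \<inter> Q \<noteq> {}" using K12(3) by blast
  then have "\<forall>K. relevant E Q g K \<longrightarrow> K \<inter> Q \<subseteq> Kh \<inter> Q"
    using d Kh(1) K12(1) unfolding dominated_def by blast
  then show ?thesis using Kg Kh by blast
qed

lemma dom_single:
  assumes g: "g \<in> \<Gamma>" and h: "h \<in> \<Gamma>" and d: "dominated E Q g h" and eq: "T g = T h"
  shows "single h"
  unfolding single_def
proof (intro allI impI)
  fix K' assume K': "relevant E Q h K'"
  obtain Kg where Kg: "relevant E Q g Kg" "Kg \<inter> Q = T g" using T_rel[OF g] by blast
  have sub: "K' \<inter> Q \<subseteq> T h" using T_sup[OF K'] .
  have ne: "K' \<inter> Q \<noteq> {}" using K' unfolding relevant_def by blast
  have "(\<forall>K. relevant E Q g K \<longrightarrow> K \<inter> Q \<subseteq> K' \<inter> Q) \<or> (\<forall>K. relevant E Q g K \<longrightarrow> K \<inter> K' \<inter> Q = {})"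
    using d K' unfolding dominated_def by blast
  then show "K' \<inter> Q = T h"
  proof
    assume "\<forall>K. relevant E Q g K \<longrightarrow> K \<inter> Q \<subseteq> K' \<inter> Q"
    then have "T g \<subseteq> K' \<inter> Q" using Kg by blast
    then show ?thesis using sub eq by blast
  next
    assume "\<forall>K. relevant E Q g K \<longrightarrow> K \<inter> K' \<inter> Q = {}"
    then have "Kg \<inter> K' \<inter> Q = {}" using Kg by blast
    then show ?thesis using Kg(2) eq sub ne by blast
  qed
qed

lemma ident:
  assumes "identified E Q \<Gamma> g h" "g \<in> \<Gamma>"
  shows "h \<in> \<Gamma> \<and> T g = T h \<and> (g = h \<or> single g \<and> single h)"
  using assms(1) unfolding identified_def
proof (induction rule: rtranclp_induct)
  case base then show ?case using assms(2) by simp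
next
  case (step y z)
  then have yz: "y \<in> \<Gamma>" "z \<in> \<Gamma>" "dominated E Q y z" "dominated E Q z y" by auto
  have e: "T y \<subseteq> T z" "T z \<subseteq> T y" using dom_sub yz by auto
  then have sy: "single y" "single z" using dom_single yz by auto
  show ?case using step.IH yz e sy by auto
qed

definition TX :: "'a set set \<Rightarrow> 'a set" where
  "TX X = T (SOME g. g \<in> X)"

definition B :: "'a set set \<Rightarrow> 'c set" where
  "B X = br ` X"

lemma cls_rep:
  assumes X: "X \<in> att_vertices V E Q"
  obtains g where "g \<in> \<Gamma>" "X = {g' \<in> \<Gamma>. identified E Q \<Gamma> g g'}"
  using X unfolding att_vertices_def by blast

lemma cls_mem:
  assumes X: "X \<in> att_vertices V E Q"
  obtains g where "g \<in> X" "\<And>g'. g' \<in> X \<Longrightarrow> g' \<in> \<Gamma> \<and> T g' = T g \<and> (g = g' \<or> single g \<and> single g')"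
proof -
  obtain g where g: "g \<in> \<Gamma>" "X = {g' \<in> \<Gamma>. identified E Q \<Gamma> g g'}"
    using cls_rep[OF X] by blast
  have gX: "g \<in> X" using g unfolding identified_def by simp
  have "\<And>g'. g' \<in> X \<Longrightarrow> g' \<in> \<Gamma> \<and> T g' = T g \<and> (g = g' \<or> single g \<and> single g')"
  proof -
    fix g' assume "g' \<in> X"
    then have "identified E Q \<Gamma> g g'" using g by simp
    from ident[OF this g(1)] show "g' \<in> \<Gamma> \<and> T g' = T g \<and> (g = g' \<or> single g \<and> single g')"
      by metis
  qed
  then show ?thesis using that gX by blast
qed

lemma cls_ne: "X \<in> att_vertices V E Q \<Longrightarrow> X \<noteq> {}"
  by (metis cls_mem empty_iff)

lemma cls_sub: "X \<in> att_vertices V E Q \<Longrightarrow> g \<in> X \<Longrightarrow> g \<in> \<Gamma>"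
  by (metis cls_mem)

lemma cls_T: 
  assumes X: "X \<in> att_vertices V E Q" and g: "g \<in> X" shows "T g = TX X"
proof -
  obtain g0 where g0: "g0 \<in> X" "\<And>g'. g' \<in> X \<Longrightarrow> g' \<in> \<Gamma> \<and> T g' = T g0 \<and> (g0 = g' \<or> single g0 \<and> single g')"
    using cls_mem[OF X] by blast
  have "(SOME g. g \<in> X) \<in> X" using g0(1) by (rule someI)
  then have "TX X = T g0" unfolding TX_def using g0(2) by blast
  then show ?thesis using g0(2)[OF g] by simp
qed

lemma cls_single:
  assumes X: "X \<in> att_vertices V E Q" and g1: "g1 \<in> X" and g2: "g2 \<in> X" and ne: "g1 \<noteq> g2"
  shows "single g1"
proof -
  obtain g0 where g0: "g0 \<in> X" "\<And>g'. g' \<in> X \<Longrightarrow> g' \<in> \<Gamma> \<and> T g' = T g0 \<and> (g0 = g' \<or> single g0 \<and> single g')"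
    using cls_mem[OF X] by blast
  show ?thesis
  proof (cases "g0 = g1")
    case True
    then have "single g0 \<and> single g2" using g0(2)[OF g2] ne by blast
    then show ?thesis using True by simp
  next
    case False
    then show ?thesis using g0(2)[OF g1] by blast
  qed
qed

lemma same_part:
  assumes X: "X \<in> att_vertices V E Q" and g0: "g0 \<in> X" and g: "g \<in> X" and K: "relevant E Q g0 K"
  shows "\<exists>K'. relevant E Q g K' \<and> K' \<inter> Q = K \<inter> Q"
proof (cases "g = g0")
  case True then show ?thesis using K by blast
next
  case False
  have p: "single g0" "T g0 = TX X" "T g = TX X" "g \<in> \<Gamma>"
    using cls_single[OF X g0 g] False cls_T[OF X g0] cls_T[OF X g] cls_sub[OF X g] by auto
  obtain K' where "relevant E Q g K'" "K' \<inter> Q = T g" using T_rel[OF p(4)] by blast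
  then show ?thesis using p K unfolding single_def by auto
qed

lemma covers: "X \<in> att_vertices V E Q \<Longrightarrow> q \<in> TX X \<Longrightarrow> B X \<subseteq> cov q"
  unfolding B_def using cls_sub cls_T T_cov by (metis image_subset_iff)

lemma B_ne: "X \<in> att_vertices V E Q \<Longrightarrow> B X \<noteq> {}"
  unfolding B_def using cls_ne by blast

lemma TX_ne: "X \<in> att_vertices V E Q \<Longrightarrow> TX X \<noteq> {}"
  using cls_ne cls_sub cls_T T_ne by (metis ex_in_conv)

lemma TX_Q: "TX X \<subseteq> Q"
  unfolding TX_def using T_Q by blast

lemma antip_edge:
  assumes e: "att_edge V E Q X Y Antipodal"
  shows "B X \<inter> B Y = {} \<and> TX X \<inter> TX Y \<noteq> {}"
proof -
  note XY = av1[OF e] av2[OF e]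
  obtain g0 h0 where gh: "g0 \<in> X" "h0 \<in> Y" "antipodal E Q g0 h0"
    using antip_pair[OF e] by blast
  obtain K K' where KK: "relevant E Q g0 K" "relevant E Q h0 K'" "K \<inter> K' \<inter> Q \<noteq> {}"
    "\<not> K \<inter> Q \<subseteq> K' \<inter> Q" "\<not> K' \<inter> Q \<subseteq> K \<inter> Q"
    using gh(3) unfolding antipodal_def by blast
  have "K \<inter> Q \<subseteq> TX X" "K' \<inter> Q \<subseteq> TX Y"
    using T_sup[OF KK(1)] T_sup[OF KK(2)] cls_T[OF XY(1) gh(1)] cls_T[OF XY(2) gh(2)] by simp_all
  then have t: "TX X \<inter> TX Y \<noteq> {}" using KK(3) by blast
  have "B X \<inter> B Y = {}"
  proof (rule ccontr)
    assume "B X \<inter> B Y \<noteq> {}"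
    then obtain g h where g: "g \<in> X" and h: "h \<in> Y" and b: "br g = br h" unfolding B_def by auto
    obtain R where R: "relevant E Q g R" "R \<inter> Q = K \<inter> Q" using same_part[OF XY(1) gh(1) g KK(1)] by blast
    obtain R' where R': "relevant E Q h R'" "R' \<inter> Q = K' \<inter> Q" using same_part[OF XY(2) gh(2) h KK(2)] by blast
    note G = cls_sub[OF XY(1) g] cls_sub[OF XY(2) h]
    have "R \<inter> R' \<inter> Q \<noteq> {}" using R(2) R'(2) KK(3) by blast
    then have "R \<inter> Q \<subseteq> R' \<inter> Q \<or> R' \<inter> Q \<subseteq> R \<inter> Q" using A3[OF G b R(1) R'(1)] by blast
    then show False using R(2) R'(2) KK(4,5) by simp
  qed
  then show ?thesis using t by simp
qed

lemma dom_edge: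
  assumes e: "att_edge V E Q X Y Dominance"
  shows "TX X \<inter> TX Y \<noteq> {} \<and> (TX X \<subseteq> TX Y \<or> TX Y \<subseteq> TX X)"
proof -
  note XY = av1[OF e] av2[OF e]
  obtain g h where gh: "g \<in> X" "h \<in> Y" "attached E Q g h" using dom_pair[OF e] by blast
  have na: "\<not> antipodal E Q g h" using dom_nanti[OF e gh(1,2)] .
  note G = cls_sub[OF XY(1) gh(1)] cls_sub[OF XY(2) gh(2)]
  note TT = cls_T[OF XY(1) gh(1)] cls_T[OF XY(2) gh(2)]
  obtain K K' where KK: "relevant E Q g K" "relevant E Q h K'" "K \<inter> K' \<inter> Q \<noteq> {}"
    using gh(3) unfolding attached_def by blast
  have t: "T g \<inter> T h \<noteq> {}" using T_sup[OF KK(1)] T_sup[OF KK(2)] KK(3) by blast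
  obtain Kg where Kg: "relevant E Q g Kg" "Kg \<inter> Q = T g" using T_rel[OF G(1)] by blast
  obtain Kh where Kh: "relevant E Q h Kh" "Kh \<inter> Q = T h" using T_rel[OF G(2)] by blast
  have "Kg \<inter> Kh \<inter> Q \<noteq> {}" using t Kg Kh by blast
  then have "Kg \<inter> Q \<subseteq> Kh \<inter> Q \<or> Kh \<inter> Q \<subseteq> Kg \<inter> Q" using na Kg Kh unfolding antipodal_def by blast
  then show ?thesis using t TT Kg Kh by auto
qed

lemma pair:
  assumes c: "c \<in> C" and e1: "att_edge V E Q C X Dominance" and e2: "att_edge V E Q C Y Dominance"
    and e3: "att_edge V E Q X Y Antipodal"
  shows "br c \<in> B X \<longleftrightarrow> br c \<notin> B Y"
proof -
  note av = av1[OF e1] av2[OF e1] av2[OF e2]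
  obtain p where p: "p \<in> TX X" "p \<in> TX Y" using antip_edge[OF e3] by blast
  have d: "B X \<inter> B Y = {}" using antip_edge[OF e3] by blast
  have c1: "TX X \<subseteq> TX C \<or> TX C \<subseteq> TX X" using dom_edge[OF e1] by blast
  have c2: "TX Y \<subseteq> TX C \<or> TX C \<subseteq> TX Y" using dom_edge[OF e2] by blast
  obtain q where q: "q \<in> TX C" "q \<in> TX X" "q \<in> TX Y"
  proof (cases "TX X \<subseteq> TX C \<or> TX Y \<subseteq> TX C")
    case True then show ?thesis using that p by blast
  next
    case False
    then have "TX C \<subseteq> TX X" "TX C \<subseteq> TX Y" using c1 c2 by auto
    moreover obtain q where "q \<in> TX C" using TX_ne[OF av(1)] by blast
    ultimately show ?thesis using that by blast
  qed
  have qQ: "q \<in> Q" using q TX_Q by blast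
  have cv: "B C \<subseteq> cov q" "B X \<subseteq> cov q" "B Y \<subseteq> cov q" using covers[OF av(1)] covers[OF av(2)] covers[OF av(3)] q by blast+
  have bc: "br c \<in> cov q" using cv c unfolding B_def by auto
  obtain x where x: "x \<in> B X" using B_ne[OF av(2)] by blast
  obtain y where y: "y \<in> B Y" using B_ne[OF av(3)] by blast
  have "x \<noteq> y" using x y d by blast
  show ?thesis
  proof
    assume "br c \<in> B X" then show "br c \<notin> B Y" using d by blast
  next
    assume "br c \<notin> B Y"
    show "br c \<in> B X"
    proof (rule ccontr)
      assume "br c \<notin> B X"
      then show False using three[OF qQ bc, of x y] cv x y \<open>x \<noteq> y\<close> \<open>br c \<notin> B Y\<close> by blast
    qed
  qed
qed

lemma tri:
  assumes c: "c \<in> C" and e1: "att_edge V E Q C X Antipodal" and e2: "att_edge V E Q X Y Antipodal"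
    and e3: "att_edge V E Q C Y Dominance"
  shows "br c \<in> B Y"
proof -
  note av = av1[OF e1] av2[OF e1] av2[OF e2]
  obtain p1 where p1: "p1 \<in> TX C" "p1 \<in> TX X" using antip_edge[OF e1] by blast
  obtain p2 where p2: "p2 \<in> TX X" "p2 \<in> TX Y" using antip_edge[OF e2] by blast
  have d1: "B C \<inter> B X = {}" using antip_edge[OF e1] by blast
  have d2: "B X \<inter> B Y = {}" using antip_edge[OF e2] by blast
  have cmp: "TX Y \<subseteq> TX C \<or> TX C \<subseteq> TX Y" using dom_edge[OF e3] by blast
  obtain q where q: "q \<in> TX C" "q \<in> TX X" "q \<in> TX Y"
    using cmp p1 p2 by blast
  have qQ: "q \<in> Q" using q TX_Q by blast
  have cv: "B C \<subseteq> cov q" "B X \<subseteq> cov q" "B Y \<subseteq> cov q" using covers[OF av(1)] covers[OF av(2)] covers[OF av(3)] q by blast+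
  have bcC: "br c \<in> B C" using c unfolding B_def by auto
  obtain x where x: "x \<in> B X" using B_ne[OF av(2)] by blast
  obtain y where y: "y \<in> B Y" using B_ne[OF av(3)] by blast
  show ?thesis
  proof (rule ccontr)
    assume "br c \<notin> B Y"
    moreover have "br c \<noteq> x" using bcC x d1 by blast
    moreover have "x \<noteq> y" using x y d2 by blast
    ultimately show False using three[OF qQ, of "br c" x y] cv bcC x y by blast
  qed
qed

lemma no_triangle: "\<not> has_full_antipodal_triangle V E Q"
proof
  assume "has_full_antipodal_triangle V E Q"
  then obtain X Y Z where e: "att_edge V E Q X Y Antipodal" "att_edge V E Q Y Z Antipodal"
    "att_edge V E Q X Z Antipodal" and n: "neighboring_set E Q {X, Y, Z}"
    unfolding has_full_antipodal_triangle_def by blast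
  note av = av1[OF e(1)] av2[OF e(1)] av2[OF e(2)]
  obtain v where v: "v \<in> Q" "\<forall>W\<in>{X, Y, Z}. \<exists>g\<in>W. neighboring_sub E Q g v"
    using n unfolding neighboring_set_def by blast
  have nb: "\<And>W. W \<in> {X, Y, Z} \<Longrightarrow> \<exists>b \<in> B W. b \<in> cov v"
  proof -
    fix W assume W: "W \<in> {X, Y, Z}"
    then obtain g K where g: "g \<in> W" "relevant E Q g K" "v \<in> K"
      using v unfolding neighboring_sub_def by blast
    have "W \<in> att_vertices V E Q" using av W by blast
    then have "g \<in> \<Gamma>" using cls_sub g(1) by blast
    then have "br g \<in> cov v" using A2 g v by blast
    then show "\<exists>b \<in> B W. b \<in> cov v" using g unfolding B_def by blast
  qed
  obtain x y z where "x \<in> B X" "y \<in> B Y" "z \<in> B Z" "x \<in> cov v" "y \<in> cov v" "z \<in> cov v"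
    using nb by (metis insertCI)
  moreover have "B X \<inter> B Y = {}" "B Y \<inter> B Z = {}" "B X \<inter> B Z = {}"
    using antip_edge[OF e(1)] antip_edge[OF e(2)] antip_edge[OF e(3)] by blast+
  ultimately show False using three[OF v(1), of x y z] by blast
qed

end

lemma W0_ant: "1 \<le> i \<Longrightarrow> i \<le> 2*k+1 \<Longrightarrow> (i, i mod (2*k+1) + 1, Antipodal) \<in> snd (W0 k)"
  unfolding W0_def by auto
lemma W0_dom: "1 \<le> i \<Longrightarrow> i \<le> 2*k+1 \<Longrightarrow> (0, i, Dominance) \<in> snd (W0 k)"
  unfolding W0_def by auto
lemma W0_0: "0 \<in> fst (W0 k)" unfolding W0_def by auto

lemma W1_ant: "1 \<le> i \<Longrightarrow> i \<le> 2*k+1 \<Longrightarrow> (i, i mod (2*k+1) + 1, Antipodal) \<in> snd (W1 k)"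
  unfolding W1_def by auto
lemma W1_dom: "2 \<le> i \<Longrightarrow> i \<le> 2*k+1 \<Longrightarrow> (0, i, Dominance) \<in> snd (W1 k)"
  unfolding W1_def by auto
lemma W1_01: "(0, 1, Antipodal) \<in> snd (W1 k)"
  unfolding W1_def by auto
lemma W1_0: "0 \<in> fst (W1 k)" unfolding W1_def by auto

lemma F_ant: "1 \<le> i \<Longrightarrow> i \<le> 2*n - 1 \<Longrightarrow> (i, i+1, Antipodal) \<in> snd (Ffan n)"
  unfolding Ffan_def by auto
lemma F_dom: "2 \<le> i \<Longrightarrow> i \<le> 2*n - 1 \<Longrightarrow> (0, i, Dominance) \<in> snd (Ffan n)"
  unfolding Ffan_def by auto
lemma F_01: "(0, 1, Antipodal) \<in> snd (Ffan n)" "(0, 2*n, Antipodal) \<in> snd (Ffan n)"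
  unfolding Ffan_def by auto
lemma F_0: "0 \<in> fst (Ffan n)" unfolding Ffan_def by auto

lemma edge_of: "\<forall>(u, v, c) \<in> snd F. P u v c \<Longrightarrow> (u, v, c) \<in> snd F \<Longrightarrow> P u v c"
  by blast

context absQ
begin

lemma hub:
  assumes "\<phi> ` fst F \<subseteq> att_vertices V E Q" "0 \<in> fst F"
  obtains c where "c \<in> \<phi> 0"
  using assms cls_ne by blast

lemma no_W0:
  assumes k: "k \<ge> 1" shows "\<not> contains_colored_subgraph V E Q (W0 k)"
proof
  assume "contains_colored_subgraph V E Q (W0 k)"
  then obtain \<phi> where im: "\<phi> ` fst (W0 k) \<subseteq> att_vertices V E Q"
    and ed: "\<forall>(u, v, c) \<in> snd (W0 k). att_edge V E Q (\<phi> u) (\<phi> v) c"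
    unfolding contains_colored_subgraph_def by blast
  obtain c where c: "c \<in> \<phi> 0" using hub[OF im W0_0] by blast
  define s where "s i = (br c \<in> B (\<phi> i))" for i
  have ant: "\<And>i. 1 \<le> i \<Longrightarrow> i \<le> 2*k+1 \<Longrightarrow> att_edge V E Q (\<phi> i) (\<phi> (i mod (2*k+1) + 1)) Antipodal"
    using edge_of[OF ed W0_ant] by blast
  have dom: "\<And>i. 1 \<le> i \<Longrightarrow> i \<le> 2*k+1 \<Longrightarrow> att_edge V E Q (\<phi> 0) (\<phi> i) Dominance"
    using edge_of[OF ed W0_dom] by blast
  have step: "\<forall>i. 1 \<le> i \<longrightarrow> i < 2*k+1 \<longrightarrow> (s i \<longleftrightarrow> \<not> s (Suc i))"
  proof (intro allI impI)
    fix i assume i: "1 \<le> i" "i < 2*k+1"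
    have "i mod (2*k+1) + 1 = Suc i" using i by simp
    then have "att_edge V E Q (\<phi> i) (\<phi> (Suc i)) Antipodal" using ant[of i] i by simp
    then show "s i \<longleftrightarrow> \<not> s (Suc i)" unfolding s_def using pair[OF c dom dom] i by simp
  qed
  have "s (2*k+1) \<longleftrightarrow> (s 1 \<longleftrightarrow> even (2*k+1 - 1))" using alt_lemma[OF step, of "2*k+1"] by simp
  then have e1: "s (2*k+1) \<longleftrightarrow> s 1" by simp
  have "(2*k+1) mod (2*k+1) + 1 = 1" by simp
  then have "att_edge V E Q (\<phi> (2*k+1)) (\<phi> 1) Antipodal" using ant[of "2*k+1"] by simp
  then have "s (2*k+1) \<longleftrightarrow> \<not> s 1" unfolding s_def using pair[OF c dom dom] by simp
  then show False using e1 by simp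
qed

lemma no_W1:
  assumes k: "k \<ge> 1" shows "\<not> contains_colored_subgraph V E Q (W1 k)"
proof
  assume "contains_colored_subgraph V E Q (W1 k)"
  then obtain \<phi> where im: "\<phi> ` fst (W1 k) \<subseteq> att_vertices V E Q"
    and ed: "\<forall>(u, v, c) \<in> snd (W1 k). att_edge V E Q (\<phi> u) (\<phi> v) c"
    unfolding contains_colored_subgraph_def by blast
  obtain c where c: "c \<in> \<phi> 0" using hub[OF im W1_0] by blast
  define s where "s i = (br c \<in> B (\<phi> i))" for i
  have ant: "\<And>i. 1 \<le> i \<Longrightarrow> i \<le> 2*k+1 \<Longrightarrow> att_edge V E Q (\<phi> i) (\<phi> (i mod (2*k+1) + 1)) Antipodal"
    using edge_of[OF ed W1_ant] by blast
  have dom: "\<And>i. 2 \<le> i \<Longrightarrow> i \<le> 2*k+1 \<Longrightarrow> att_edge V E Q (\<phi> 0) (\<phi> i) Dominance"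
    using edge_of[OF ed W1_dom] by blast
  have a01: "att_edge V E Q (\<phi> 0) (\<phi> 1) Antipodal"
    using edge_of[OF ed W1_01] by blast
  have step: "\<forall>i. 2 \<le> i \<longrightarrow> i < 2*k+1 \<longrightarrow> (s i \<longleftrightarrow> \<not> s (Suc i))"
  proof (intro allI impI)
    fix i assume i: "2 \<le> i" "i < 2*k+1"
    have "i mod (2*k+1) + 1 = Suc i" using i by simp
    then have "att_edge V E Q (\<phi> i) (\<phi> (Suc i)) Antipodal" using ant[of i] i by simp
    then show "s i \<longleftrightarrow> \<not> s (Suc i)" unfolding s_def using pair[OF c dom dom] i by simp
  qed
  have "s (2*k+1) \<longleftrightarrow> (s 2 \<longleftrightarrow> even (2*k+1 - 2))" using alt_lemma[OF step, of "2*k+1"] k by simp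
  moreover have "odd (2*k+1-2)" using k by presburger
  ultimately have e1: "s (2*k+1) \<longleftrightarrow> \<not> s 2" by simp
  have "1 mod (2*k+1) + 1 = 2" using k by simp
  then have a12: "att_edge V E Q (\<phi> 1) (\<phi> 2) Antipodal" using ant[of 1] k by (simp add: numeral_2_eq_2)
  have s2: "s 2" unfolding s_def using tri[OF c a01 a12 dom] k by simp
  have "(2*k+1) mod (2*k+1) + 1 = 1" by simp
  then have "att_edge V E Q (\<phi> (2*k+1)) (\<phi> 1) Antipodal" using ant[of "2*k+1"] by simp
  then have a1l: "att_edge V E Q (\<phi> 1) (\<phi> (2*k+1)) Antipodal" by (rule att_edge_sym)
  have "s (2*k+1)" unfolding s_def using tri[OF c a01 a1l dom] k by simp
  then show False using e1 s2 by simp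
qed

lemma no_F:
  assumes n: "n \<ge> 2" shows "\<not> contains_colored_subgraph V E Q (Ffan n)"
proof
  assume "contains_colored_subgraph V E Q (Ffan n)"
  then obtain \<phi> where im: "\<phi> ` fst (Ffan n) \<subseteq> att_vertices V E Q"
    and ed: "\<forall>(u, v, c) \<in> snd (Ffan n). att_edge V E Q (\<phi> u) (\<phi> v) c"
    unfolding contains_colored_subgraph_def by blast
  obtain c where c: "c \<in> \<phi> 0" using hub[OF im F_0] by blast
  define s where "s i = (br c \<in> B (\<phi> i))" for i
  have ant: "\<And>i. 1 \<le> i \<Longrightarrow> i \<le> 2*n-1 \<Longrightarrow> att_edge V E Q (\<phi> i) (\<phi> (i+1)) Antipodal"
    using edge_of[OF ed F_ant] by blast
  have dom: "\<And>i. 2 \<le> i \<Longrightarrow> i \<le> 2*n-1 \<Longrightarrow> att_edge V E Q (\<phi> 0) (\<phi> i) Dominance"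
    using edge_of[OF ed F_dom] by blast
  have a01: "att_edge V E Q (\<phi> 0) (\<phi> 1) Antipodal" "att_edge V E Q (\<phi> 0) (\<phi> (2*n)) Antipodal"
    using edge_of[OF ed F_01(1)] edge_of[OF ed F_01(2)] by blast+
  have step: "\<forall>i. 2 \<le> i \<longrightarrow> i < 2*n-1 \<longrightarrow> (s i \<longleftrightarrow> \<not> s (Suc i))"
  proof (intro allI impI)
    fix i assume i: "2 \<le> i" "i < 2*n-1"
    have "att_edge V E Q (\<phi> i) (\<phi> (Suc i)) Antipodal" using ant[of i] i by simp
    then show "s i \<longleftrightarrow> \<not> s (Suc i)" unfolding s_def using pair[OF c dom dom] i by simp
  qed
  have "s (2*n-1) \<longleftrightarrow> (s 2 \<longleftrightarrow> even (2*n-1 - 2))" using alt_lemma[OF step, of "2*n-1"] n by simp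
  moreover have "odd (2*n-1-2)" using n by presburger
  ultimately have e1: "s (2*n-1) \<longleftrightarrow> \<not> s 2" by simp
  have a12: "att_edge V E Q (\<phi> 1) (\<phi> 2) Antipodal" using ant[of 1] n by (simp add: numeral_2_eq_2)
  have s2: "s 2" unfolding s_def using tri[OF c a01(1) a12 dom] n by simp
  have "att_edge V E Q (\<phi> (2*n-1)) (\<phi> (2*n-1+1)) Antipodal" using ant[of "2*n-1"] n by simp
  moreover have "2*n-1+1 = 2*n" using n by simp
  ultimately have "att_edge V E Q (\<phi> (2*n-1)) (\<phi> (2*n)) Antipodal" by simp
  then have a2: "att_edge V E Q (\<phi> (2*n)) (\<phi> (2*n-1)) Antipodal" by (rule att_edge_sym)
  have "s (2*n-1)" unfolding s_def using tri[OF c a01(2) a2 dom] n by simp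
  then show False using e1 s2 by simp
qed

lemma no_F0: "\<forall>F\<in>F0. \<not> contains_colored_subgraph V E Q F"
  unfolding F0_def using no_W0 no_W1 no_F by blast

end

lemma clique_ext:
  assumes fin: "finite g" and A: "complete_set g E A"
  shows "\<exists>K. clique g E K \<and> A \<subseteq> K"
proof -
  have "\<forall>K. complete_set g E K \<and> A \<subseteq> K \<longrightarrow> card K < card g + 1"
    using fin by (auto simp: complete_set_def intro: card_mono le_imp_less_Suc)
  then obtain K where K: "complete_set g E K \<and> A \<subseteq> K"
    "\<forall>K'. complete_set g E K' \<and> A \<subseteq> K' \<longrightarrow> card K' \<le> card K"
    using ex_has_greatest_nat[of "\<lambda>K. complete_set g E K \<and> A \<subseteq> K" A card "card g + 1"] A by blast
  have "clique g E K"
    unfolding clique_def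
  proof (intro conjI allI impI)
    show "complete_set g E K" using K by blast
  next
    fix K' assume K': "complete_set g E K' \<and> K \<subseteq> K'"
    then have "card K' \<le> card K" using K by blast
    moreover have "finite K'" using K' fin by (meson complete_set_def finite_subset)
    ultimately show "K' = K" using K' card_seteq by blast
  qed
  then show ?thesis using K by blast
qed

lemma Q_ne:
  assumes gr: "graph V E" and conn: "connected_graph V E" and Qs: "clique_separator V E Q"
  shows "Q \<noteq> {}"
proof
  assume Q: "Q = {}"
  have "comps V E \<subseteq> {V}"
  proof
    fix C assume "C \<in> comps V E"
    then obtain x where x: "x \<in> V" "C = {y \<in> V. reach V E x y}" unfolding comps_def by blast
    then have "C = V" using conn unfolding connected_graph_def by blast
    then show "C \<in> {V}" by simp
  qed
  then have "card (comps V E) \<le> card {V}" by (intro card_mono) auto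
  then have "card (comps V E) \<le> 1" by simp
  moreover have "card (comps (V - Q) E) \<ge> 2" using Qs unfolding clique_separator_def by blast
  ultimately show False using Q by simp
qed

locale pm = tr TV TE for TV :: "'b set" and TE +
  fixes V :: "'a set" and E :: "'a \<Rightarrow> 'a \<Rightarrow> bool" and f :: "'a \<Rightarrow> 'b set" and Q :: "'a set" and t0 :: 'b
  assumes gr: "graph V E" and conn: "connected_graph V E"
    and fpath: "\<forall>v\<in>V. is_path_set TV TE (f v)"
    and fE: "\<forall>u\<in>V. \<forall>v\<in>V. u \<noteq> v \<longrightarrow> (E u v \<longleftrightarrow> f u \<inter> f v \<noteq> {})"
    and Qs: "clique_separator V E Q"
    and t0Q: "\<forall>q\<in>Q. t0 \<in> f q"
    and t0T: "t0 \<in> TV"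
begin

abbreviation "\<Gamma> \<equiv> Gamma V E Q"

lemma Esym: "E u v \<Longrightarrow> E v u" using gr unfolding graph_def by blast
lemma Eirr: "\<not> E v v" using gr unfolding graph_def by blast
lemma EV: "E u v \<Longrightarrow> u \<in> V \<and> v \<in> V" using gr unfolding graph_def by blast
lemma finV: "finite V" using gr unfolding graph_def by blast

lemma Qcl: "clique V E Q" using Qs unfolding clique_separator_def by blast
lemma QV: "Q \<subseteq> V" using Qcl unfolding clique_def complete_set_def by blast
lemma Qadj: "q \<in> Q \<Longrightarrow> q' \<in> Q \<Longrightarrow> q \<noteq> q' \<Longrightarrow> E q q'"
  using Qcl unfolding clique_def complete_set_def by blast

lemma Qmax: assumes c: "c \<in> V" "c \<notin> Q" shows "\<exists>q\<in>Q. \<not> E c q"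
proof (rule ccontr)
  assume "\<not> (\<exists>q\<in>Q. \<not> E c q)"
  then have "complete_set V E (insert c Q)"
    using c QV Qadj Esym unfolding complete_set_def by auto
  then have "insert c Q = Q" using Qcl unfolding clique_def by blast
  then show False using c by blast
qed

lemma fpl: "v \<in> V \<Longrightarrow> \<exists>xs. pl xs \<and> f v = set xs"
  using fpath unfolding is_path_set_def pl_def by blast

lemma fsub: "v \<in> V \<Longrightarrow> f v \<subseteq> TV" using fpl by (auto simp: pl_def)
lemma fne: "v \<in> V \<Longrightarrow> f v \<noteq> {}" using fpl by (fastforce simp: pl_def)

lemma adj: "u \<in> V \<Longrightarrow> v \<in> V \<Longrightarrow> u \<noteq> v \<Longrightarrow> E u v \<longleftrightarrow> f u \<inter> f v \<noteq> {}"
  using fE by blast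

lemma not_t0: assumes c: "c \<in> V" "c \<notin> Q" shows "t0 \<notin> f c"
proof
  assume t: "t0 \<in> f c"
  obtain q where q: "q \<in> Q" "\<not> E c q" using Qmax[OF c] by blast
  have "c \<noteq> q" using c q by blast
  moreover have "f c \<inter> f q \<noteq> {}" using t t0Q q by blast
  ultimately have "E c q" using adj c q QV by blast
  then show False using q by blast
qed

lemma f_reach: assumes v: "v \<in> V" and x: "x \<in> f v" and y: "y \<in> f v" shows "reach (f v) TE x y"
proof -
  obtain xs where xs: "pl xs" "f v = set xs" using fpl[OF v] by blast
  have s: "successively TE xs" "set xs \<subseteq> set xs" "xs \<noteq> []" using xs by (auto simp: pl_def)
  have "reach (set xs) TE (hd xs) x" "reach (set xs) TE (hd xs) y"
    using path_reach[OF s] x y xs by auto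
  then show ?thesis using xs reach_sym[OF symall] reach_trans by metis
qed

lemma comp_form: "C \<in> comps (V - Q) E \<Longrightarrow> \<exists>x\<in>V - Q. C = {y \<in> V - Q. reach (V - Q) E x y}"
  unfolding comps_def by blast

lemma gamma_form: "g \<in> \<Gamma> \<Longrightarrow> \<exists>C\<in>comps (V - Q) E. g = C \<union> Q"
  unfolding Gamma_def by blast

lemma comp_sub: "C \<in> comps (V - Q) E \<Longrightarrow> C \<subseteq> V - Q"
  unfolding comps_def by blast

lemma gamma_C: assumes "g \<in> \<Gamma>" obtains C where "C \<in> comps (V - Q) E" "g = C \<union> Q" "g - Q = C" "C \<subseteq> V - Q"
proof -
  obtain C where C: "C \<in> comps (V - Q) E" "g = C \<union> Q" using gamma_form[OF assms] by blast
  have "C \<subseteq> V - Q" using comp_sub[OF C(1)] .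
  then show ?thesis using that C by blast
qed

lemma gamma_V: "g \<in> \<Gamma> \<Longrightarrow> g \<subseteq> V"
  using QV by (metis Diff_subset gamma_C le_sup_iff order_trans)

lemma Q_g: "g \<in> \<Gamma> \<Longrightarrow> Q \<subseteq> g"
  by (metis gamma_C sup_ge2)

lemma rel_nonQ:
  assumes g: "g \<in> \<Gamma>" and K: "relevant E Q g K"
  shows "\<exists>c\<in>K. c \<notin> Q"
proof (rule ccontr)
  assume "\<not> (\<exists>c\<in>K. c \<notin> Q)"
  then have KQ: "K \<subseteq> Q" by blast
  have "complete_set g E Q" using Q_g[OF g] Qadj unfolding complete_set_def by blast
  then have "Q = K" using K KQ unfolding relevant_def clique_def by blast
  then show False using K unfolding relevant_def by blast
qed

lemma rel_sub: "relevant E Q g K \<Longrightarrow> K \<subseteq> g"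
  unfolding relevant_def clique_def complete_set_def by blast

lemma rel_adj: "relevant E Q g K \<Longrightarrow> u \<in> K \<Longrightarrow> v \<in> K \<Longrightarrow> u \<noteq> v \<Longrightarrow> E u v"
  unfolding relevant_def clique_def complete_set_def by blast

definition Uset :: "'a set \<Rightarrow> 'b set" where
  "Uset C = \<Union>(f ` C)"

lemma U_sub: "C \<subseteq> V - Q \<Longrightarrow> Uset C \<subseteq> TV - {t0}"
  unfolding Uset_def using fsub not_t0 by blast

lemma U_conn:
  assumes C: "C \<in> comps (V - Q) E"
  shows "\<forall>x\<in>Uset C. \<forall>y\<in>Uset C. reach (Uset C) TE x y"
proof -
  obtain x0 where x0: "x0 \<in> V - Q" "C = {y \<in> V - Q. reach (V - Q) E x0 y}" using comp_form[OF C] by blast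
  have x0C: "x0 \<in> C" using x0 by (simp add: reach_refl)
  have fsubU: "\<And>c. c \<in> C \<Longrightarrow> f c \<subseteq> Uset C" unfolding Uset_def by blast
  have main: "\<And>y. reach (V - Q) E x0 y \<Longrightarrow> \<forall>a\<in>f x0. \<forall>b\<in>f y. reach (Uset C) TE a b"
  proof -
    fix y assume "reach (V - Q) E x0 y"
    then show "\<forall>a\<in>f x0. \<forall>b\<in>f y. reach (Uset C) TE a b"
      unfolding reach_def[of "V - Q"]
    proof (induction rule: rtranclp_induct)
      case base
      then show ?case using f_reach x0 reach_mono[OF fsubU[OF x0C]] by blast
    next
      case (step y z)
      have yz: "E y z" "y \<in> V - Q" "z \<in> V - Q" using step(2) by auto
      have yC: "y \<in> C" using x0 yz step(1) unfolding reach_def by simp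
      have zC: "z \<in> C" using x0 yz step(1) step(2) unfolding reach_def
        by (simp add: rtranclp.rtrancl_into_rtrancl)
      have "y \<noteq> z" using yz Eirr by blast
      then have "f y \<inter> f z \<noteq> {}" using adj yz by blast
      then obtain w where w: "w \<in> f y" "w \<in> f z" by blast
      show ?case
      proof (intro ballI)
        fix a b assume a: "a \<in> f x0" and b: "b \<in> f z"
        have "reach (Uset C) TE a w" using step(3) a w by blast
        moreover have "reach (Uset C) TE w b"
          using reach_mono[OF fsubU[OF zC] f_reach[of z w b]] yz w b by blast
        ultimately show "reach (Uset C) TE a b" by (rule reach_trans)
      qed
    qed
  qed
  obtain a where a: "a \<in> f x0" using fne x0 by blast
  show ?thesis
  proof (intro ballI)
    fix x y assume x: "x \<in> Uset C" and y: "y \<in> Uset C"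
    obtain c1 where c1: "c1 \<in> C" "x \<in> f c1" using x unfolding Uset_def by blast
    obtain c2 where c2: "c2 \<in> C" "y \<in> f c2" using y unfolding Uset_def by blast
    have "reach (Uset C) TE a x" using main c1 x0 a by blast
    moreover have "reach (Uset C) TE a y" using main c2 x0 a by blast
    ultimately show "reach (Uset C) TE x y" using reach_sym[OF symall] reach_trans by metis
  qed
qed

definition br :: "'a set \<Rightarrow> 'b set" where
  "br g = cls t0 (SOME x. x \<in> Uset (g - Q))"

definition cov :: "'a \<Rightarrow> 'b set set" where
  "cov q = cls t0 ` (f q - {t0})"

lemma br_eq:
  assumes g: "g \<in> \<Gamma>" and x: "x \<in> Uset (g - Q)"
  shows "br g = cls t0 x"
proof -
  obtain C where C: "C \<in> comps (V - Q) E" "g - Q = C" "C \<subseteq> V - Q" using gamma_C[OF g] by metis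
  have y: "(SOME x. x \<in> Uset C) \<in> Uset C" using x C by (metis someI)
  have "reach (Uset C) TE x (SOME x. x \<in> Uset C)" using U_conn[OF C(1)] x y C by blast
  then have "reach (TV - {t0}) TE x (SOME x. x \<in> Uset C)" using reach_mono[OF U_sub[OF C(3)]] by blast
  then show ?thesis unfolding br_def using cls_eq C by metis
qed

lemma PA2:
  assumes g: "g \<in> \<Gamma>" and K: "relevant E Q g K" and q: "q \<in> K" "q \<in> Q"
  shows "br g \<in> cov q"
proof -
  obtain C where C: "C \<in> comps (V - Q) E" "g - Q = C" "C \<subseteq> V - Q" using gamma_C[OF g] by metis
  obtain c where c: "c \<in> K" "c \<notin> Q" using rel_nonQ[OF g K] by blast
  have cC: "c \<in> C" using c rel_sub[OF K] C by blast
  have cV: "c \<in> V" "q \<in> V" using cC C QV q by auto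
  have "c \<noteq> q" using c q by blast
  then have "E q c" using rel_adj[OF K] c q by blast
  then have "f q \<inter> f c \<noteq> {}" using adj cV \<open>c \<noteq> q\<close> by blast
  then obtain x where x: "x \<in> f q" "x \<in> f c" by blast
  have "x \<noteq> t0" using not_t0[of c] cV c x by blast
  moreover have "br g = cls t0 x" using br_eq[OF g] x cC C unfolding Uset_def by blast
  ultimately show ?thesis unfolding cov_def using x by blast
qed

lemma PA5: "q \<in> Q \<Longrightarrow> finite (cov q) \<and> card (cov q) \<le> 2"
proof -
  assume q: "q \<in> Q"
  obtain xs where xs: "pl xs" "f q = set xs" using fpl q QV by blast
  have "t0 \<in> set xs" using xs t0Q q by blast
  then show ?thesis unfolding cov_def using cover2[OF xs(1), of t0] xs by simp
qed

lemma N_ne: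
  assumes C: "C \<in> comps (V - Q) E"
  shows "\<exists>q\<in>Q. \<exists>c\<in>C. E q c"
proof (rule ccontr)
  assume nn: "\<not> (\<exists>q\<in>Q. \<exists>c\<in>C. E q c)"
  obtain x0 where x0: "x0 \<in> V - Q" "C = {y \<in> V - Q. reach (V - Q) E x0 y}" using comp_form[OF C] by blast
  obtain q0 where q0: "q0 \<in> Q" using Q_ne[OF gr conn Qs] by blast
  have "reach V E x0 q0" using conn x0 q0 QV unfolding connected_graph_def by blast
  then have "q0 \<in> C" unfolding reach_def
  proof (induction rule: rtranclp_induct)
    case base then show ?case using x0 by (simp add: reach_refl)
  next
    case (step y z)
    have yz: "E y z" "z \<in> V" using step(2) by auto
    have "y \<in> C" using step(3) .
    then have "z \<notin> Q" using nn yz(1) Esym by blast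
    moreover have "reach (V - Q) E x0 y" "y \<in> V - Q" using step(3) x0 by auto
    ultimately have "reach (V - Q) E x0 z" using yz reach_trans[OF _ reach_step[of E y z "V - Q"]] by blast
    then show ?case using x0 yz \<open>z \<notin> Q\<close> by blast
  qed
  then show False using x0 q0 by blast
qed

lemma PA4:
  assumes g: "g \<in> \<Gamma>"
  shows "\<exists>K. relevant E Q g K \<and> (\<forall>K'. relevant E Q g K' \<longrightarrow> K' \<inter> Q \<subseteq> K \<inter> Q)"
proof -
  obtain C where C: "C \<in> comps (V - Q) E" "g - Q = C" "C \<subseteq> V - Q" "g = C \<union> Q" using gamma_C[OF g] by metis
  obtain x0 where x0: "x0 \<in> V - Q" "C = {y \<in> V - Q. reach (V - Q) E x0 y}" using comp_form[OF C(1)] by blast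
  have x0C: "x0 \<in> C" using x0 by (simp add: reach_refl)
  have Une: "Uset C \<noteq> {}" using fne x0 x0C unfolding Uset_def by blast
  have Us: "Uset C \<subseteq> TV" "t0 \<notin> Uset C" using U_sub[OF C(3)] by auto
  obtain u where u: "u \<in> Uset C" "\<forall>ps. pl ps \<longrightarrow> t0 \<in> set ps \<longrightarrow> set ps \<inter> Uset C \<noteq> {} \<longrightarrow> u \<in> set ps"
    using top[OF Us(1) t0T Us(2) Une U_conn[OF C(1)]] by blast
  obtain cs where cs: "cs \<in> C" "u \<in> f cs" using u unfolding Uset_def by blast
  define N where "N = {q \<in> Q. \<exists>c\<in>C. E q c}"
  have uN: "\<And>q. q \<in> N \<Longrightarrow> u \<in> f q"
  proof -
    fix q assume q: "q \<in> N"
    then obtain c where c: "c \<in> C" "E q c" "q \<in> Q" unfolding N_def by blast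
    obtain ps where ps: "pl ps" "f q = set ps" using fpl q c QV by blast
    have "f q \<inter> f c \<noteq> {}" using adj c EV by (metis Eirr)
    then have "set ps \<inter> Uset C \<noteq> {}" using ps c unfolding Uset_def by blast
    then show "u \<in> f q" using u(2) ps t0Q c by blast
  qed
  have csV: "cs \<in> V" "cs \<notin> Q" using cs C by auto
  have comp: "complete_set g E (insert cs N)"
    unfolding complete_set_def
  proof (intro conjI ballI impI)
    show "insert cs N \<subseteq> g" using cs C N_def by blast
  next
    fix x y assume xy: "x \<in> insert cs N" "y \<in> insert cs N" "x \<noteq> y"
    have qc: "\<And>q. q \<in> N \<Longrightarrow> E q cs"
    proof -
      fix q assume q: "q \<in> N"
      then have "q \<in> V" "q \<noteq> cs" using QV csV unfolding N_def by auto
      moreover have "f q \<inter> f cs \<noteq> {}" using uN[OF q] cs by blast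
      ultimately show "E q cs" using adj csV by blast
    qed
    have NQ: "N \<subseteq> Q" unfolding N_def by blast
    show "E x y"
    proof (cases "x = cs")
      case True
      then have "y \<in> N" using xy by blast
      then show ?thesis using True qc Esym by blast
    next
      case False
      then have xN: "x \<in> N" using xy by blast
      show ?thesis
      proof (cases "y = cs")
        case True then show ?thesis using qc xN by blast
      next
        case False
        then have "y \<in> N" using xy by blast
        then show ?thesis using Qadj xN NQ xy(3) by blast
      qed
    qed
  qed
  have fing: "finite g" using gamma_V[OF g] finV finite_subset by blast
  obtain K where K: "clique g E K" "insert cs N \<subseteq> K" using clique_ext[OF fing comp] by blast
  have Nne: "N \<noteq> {}" using N_ne[OF C(1)] unfolding N_def by blast
  have relK: "relevant E Q g K"
    unfolding relevant_def using K Nne csV N_def by blast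
  have "\<forall>K'. relevant E Q g K' \<longrightarrow> K' \<inter> Q \<subseteq> K \<inter> Q"
  proof (intro allI impI subsetI)
    fix K' q assume K': "relevant E Q g K'" and q: "q \<in> K' \<inter> Q"
    obtain c where c: "c \<in> K'" "c \<notin> Q" using rel_nonQ[OF g K'] by blast
    have "c \<in> C" using c rel_sub[OF K'] C by blast
    moreover have "E q c" using rel_adj[OF K'] c q by blast
    ultimately have "q \<in> N" using q unfolding N_def by blast
    then show "q \<in> K \<inter> Q" using K q by blast
  qed
  then show ?thesis using relK by blast
qed

lemma nonadj_wit:
  assumes g: "g \<in> \<Gamma>" and K: "relevant E Q g K" and a: "a \<in> Q" "a \<notin> K"
  shows "\<exists>d\<in>K. d \<notin> Q \<and> \<not> E a d"
proof (rule ccontr)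
  assume h: "\<not> (\<exists>d\<in>K. d \<notin> Q \<and> \<not> E a d)"
  have "complete_set g E (insert a K)"
    unfolding complete_set_def
  proof (intro conjI ballI impI)
    show "insert a K \<subseteq> g" using Q_g[OF g] a rel_sub[OF K] by blast
  next
    fix x y assume xy: "x \<in> insert a K" "y \<in> insert a K" "x \<noteq> y"
    have ax: "\<And>x. x \<in> K \<Longrightarrow> E a x"
    proof -
      fix x assume x: "x \<in> K"
      show "E a x"
      proof (cases "x \<in> Q")
        case True then show ?thesis using Qadj a x by blast
      next
        case False then show ?thesis using h x by blast
      qed
    qed
    show "E x y"
    proof (cases "x = a")
      case True
      then have "y \<in> K" using xy by blast
      then show ?thesis using True ax by blast
    next
      case False
      then have xK: "x \<in> K" using xy by blast
      show ?thesis
      proof (cases "y = a")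
        case True then show ?thesis using ax xK Esym by blast
      next
        case False
        then have "y \<in> K" using xy by blast
        then show ?thesis using rel_adj[OF K] xK xy(3) by blast
      qed
    qed
  qed
  moreover have "K \<subseteq> insert a K" by blast
  ultimately have "insert a K = K" using K unfolding relevant_def clique_def by blast
  then show False using a by blast
qed

lemma PA3:
  assumes g: "g \<in> \<Gamma>" and g': "g' \<in> \<Gamma>" and b: "br g = br g'"
    and K: "relevant E Q g K" and K': "relevant E Q g' K'" and m: "K \<inter> K' \<inter> Q \<noteq> {}"
  shows "K \<inter> Q \<subseteq> K' \<inter> Q \<or> K' \<inter> Q \<subseteq> K \<inter> Q"
proof (rule ccontr)
  assume "\<not> (K \<inter> Q \<subseteq> K' \<inter> Q \<or> K' \<inter> Q \<subseteq> K \<inter> Q)"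
  then obtain a bb where a: "a \<in> K" "a \<in> Q" "a \<notin> K'" and bb: "bb \<in> K'" "bb \<in> Q" "bb \<notin> K" by blast
  obtain q where q: "q \<in> K" "q \<in> K'" "q \<in> Q" using m by blast
  obtain C where C: "C \<in> comps (V - Q) E" "g - Q = C" "C \<subseteq> V - Q" using gamma_C[OF g] by metis
  obtain C' where C': "C' \<in> comps (V - Q) E" "g' - Q = C'" "C' \<subseteq> V - Q" using gamma_C[OF g'] by metis
  obtain d' where d': "d' \<in> K'" "d' \<notin> Q" "\<not> E a d'" using nonadj_wit[OF g' K' a(2,3)] by blast
  obtain d where d: "d \<in> K" "d \<notin> Q" "\<not> E bb d" using nonadj_wit[OF g K bb(2,3)] by blast
  have dC: "d \<in> C" using d rel_sub[OF K] C by blast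
  have dC': "d' \<in> C'" using d' rel_sub[OF K'] C' by blast
  have V: "d \<in> V" "d' \<in> V" "a \<in> V" "bb \<in> V" "q \<in> V" using dC dC' C C' a bb q QV by auto
  have Eqd: "E q d" "E q d'" "E a d" "E bb d'"
    using rel_adj[OF K] rel_adj[OF K'] q d d' a bb by metis+
  have fd: "f d \<subseteq> TV" "t0 \<notin> f d" "f d \<noteq> {}" "\<forall>x\<in>f d. \<forall>y\<in>f d. reach (f d) TE x y"
    using fsub not_t0 fne f_reach V d by auto
  obtain u where u: "u \<in> f d" "\<forall>ps. pl ps \<longrightarrow> t0 \<in> set ps \<longrightarrow> set ps \<inter> f d \<noteq> {} \<longrightarrow> u \<in> set ps"
    using top[OF fd(1) t0T fd(2) fd(3) fd(4)] by blast
  have fd': "f d' \<subseteq> TV" "t0 \<notin> f d'" "f d' \<noteq> {}" "\<forall>x\<in>f d'. \<forall>y\<in>f d'. reach (f d') TE x y"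
    using fsub not_t0 fne f_reach V d' by auto
  obtain u' where u': "u' \<in> f d'" "\<forall>ps. pl ps \<longrightarrow> t0 \<in> set ps \<longrightarrow> set ps \<inter> f d' \<noteq> {} \<longrightarrow> u' \<in> set ps"
    using top[OF fd'(1) t0T fd'(2) fd'(3) fd'(4)] by blast
  have meet: "\<And>x y. x \<in> V \<Longrightarrow> y \<in> V \<Longrightarrow> E x y \<Longrightarrow> f x \<inter> f y \<noteq> {}"
    using adj Eirr by metis
  obtain pa where pa: "pl pa" "f a = set pa" using fpl V by blast
  obtain pb where pb: "pl pb" "f bb = set pb" using fpl V by blast
  obtain pq where pq: "pl pq" "f q = set pq" using fpl V by blast
  have ua: "u \<in> f a" using u(2) pa t0Q a meet[OF V(3) V(1) Eqd(3)] by auto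
  have uq: "u \<in> f q" using u(2) pq t0Q q meet[OF V(5) V(1) Eqd(1)] by auto
  have u'b: "u' \<in> f bb" using u'(2) pb t0Q bb meet[OF V(4) V(2) Eqd(4)] by auto
  have u'q: "u' \<in> f q" using u'(2) pq t0Q q meet[OF V(5) V(2) Eqd(2)] by auto
  have "br g = cls t0 u" using br_eq[OF g] u dC C unfolding Uset_def by blast
  moreover have "br g' = cls t0 u'" using br_eq[OF g'] u' dC' C' unfolding Uset_def by blast
  ultimately have "cls t0 u = cls t0 u'" using b by simp
  then have r: "reach (TV - {t0}) TE u u'" using cls_self[of u' t0] cls_mem by metis
  have ne: "u \<noteq> t0" "u' \<noteq> t0" using u u' fd(2) fd'(2) by auto
  have "(\<exists>R. pl R \<and> hd R = t0 \<and> last R = u \<and> u' \<in> set R) \<or>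
         (\<exists>R. pl R \<and> hd R = t0 \<and> last R = u' \<and> u \<in> set R)"
    using side[OF pq(1) _ _ ne(1) _ ne(2) r] t0Q q pq uq u'q by blast
  then show False
  proof
    assume "\<exists>R. pl R \<and> hd R = t0 \<and> last R = u \<and> u' \<in> set R"
    then obtain R where R: "pl R" "hd R = t0" "last R = u" "u' \<in> set R" by blast
    have "set R \<subseteq> set pa" using cvx[OF pa(1) _ _ R(1-3)] t0Q a pa ua by blast
    then have "u' \<in> f a" using R pa by blast
    then have "f a \<inter> f d' \<noteq> {}" using u' by blast
    moreover have "a \<noteq> d'" using a d' by blast
    ultimately have "E a d'" using adj V by blast
    then show False using d' by blast
  next
    assume "\<exists>R. pl R \<and> hd R = t0 \<and> last R = u' \<and> u \<in> set R"
    then obtain R where R: "pl R" "hd R = t0" "last R = u'" "u \<in> set R" by blast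
    have "set R \<subseteq> set pb" using cvx[OF pb(1) _ _ R(1-3)] t0Q bb pb u'b by blast
    then have "u \<in> f bb" using R pb by blast
    then have "f bb \<inter> f d \<noteq> {}" using u by blast
    moreover have "bb \<noteq> d" using bb d by blast
    ultimately have "E bb d" using adj V by blast
    then show False using d by blast
  qed
qed

end

theorem lemma4p5:
  fixes V :: "'a set" and E :: "'a \<Rightarrow> 'a \<Rightarrow> bool"
  assumes "graph V E"
    and "connected_graph V E"
    and "chordal V E"
    and "\<exists>Q. clique_separator V E Q"
    and "path_graph V E"
  shows "\<forall>Q. clique_separator V E Q \<longrightarrow>
           \<not> has_full_antipodal_triangle V E Q \<and>
           (\<forall>F \<in> F0. \<not> contains_colored_subgraph V E Q F)"
proof (intro allI impI)
  fix Q assume Qs: "clique_separator V E Q"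
  obtain TV :: "nat set" and TE f where T: "tree TV TE" "\<forall>v\<in>V. is_path_set TV TE (f v)"
    "\<forall>u\<in>V. \<forall>v\<in>V. u \<noteq> v \<longrightarrow> (E u v \<longleftrightarrow> f u \<inter> f v \<noteq> {})"
    using assms(5) unfolding path_graph_def by blast
  interpret tr TV TE using T(1) by unfold_locales
  have Qne: "Q \<noteq> {}" using Q_ne[OF assms(1,2) Qs] .
  have QV: "Q \<subseteq> V" using Qs unfolding clique_separator_def clique_def complete_set_def by blast
  have Qadj: "\<And>q q'. q \<in> Q \<Longrightarrow> q' \<in> Q \<Longrightarrow> q \<noteq> q' \<Longrightarrow> E q q'"
    using Qs unfolding clique_separator_def clique_def complete_set_def by blast
  have finV: "finite V" using assms(1) unfolding graph_def by blast
  have plf: "\<And>v. v \<in> V \<Longrightarrow> \<exists>xs. pl xs \<and> f v = set xs"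
    using T(2) unfolding is_path_set_def pl_def by blast
  have "\<Inter>(f ` Q) \<noteq> {}"
  proof (rule helly)
    have "finite Q" using finite_subset[OF QV finV] .
    then show "finite (f ` Q)" by simp
    show "f ` Q \<noteq> {}" using Qne by blast
    show "\<forall>A\<in>f ` Q. cvxs A"
    proof
      fix A assume "A \<in> f ` Q"
      then obtain q where "q \<in> Q" "A = f q" by blast
      then obtain xs where "pl xs" "A = set xs" using plf QV by blast
      then show "cvxs A" using cvxs_path by simp
    qed
    show "\<forall>A\<in>f ` Q. \<forall>B\<in>f ` Q. A \<inter> B \<noteq> {}"
    proof (intro ballI)
      fix A B assume "A \<in> f ` Q" "B \<in> f ` Q"
      then obtain q q' where q: "q \<in> Q" "q' \<in> Q" "A = f q" "B = f q'" by blast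
      show "A \<inter> B \<noteq> {}"
      proof (cases "q = q'")
        case True
        obtain xs where "pl xs" "f q = set xs" using plf q QV by blast
        then show ?thesis using q True by (auto simp: pl_def)
      next
        case False
        then have "E q q'" using Qadj q by blast
        then show ?thesis using q T(3) QV False by blast
      qed
    qed
  qed
  then obtain t0 where t0: "\<forall>q\<in>Q. t0 \<in> f q" by blast
  have t0T: "t0 \<in> TV"
  proof -
    obtain q where q: "q \<in> Q" using Qne by blast
    obtain xs where "pl xs" "f q = set xs" using plf q QV by blast
    then show ?thesis using t0 q by (auto simp: pl_def)
  qed
  interpret P: pm TV TE V E f Q t0
    by unfold_locales (use assms(1,2) T(2,3) Qs t0 t0T in auto)
  interpret A: absQ V E Q P.br P.cov
  proof unfold_locales
    show "\<And>g K q. g \<in> Gamma V E Q \<Longrightarrow> relevant E Q g K \<Longrightarrow> q \<in> K \<Longrightarrow> q \<in> Q \<Longrightarrow> P.br g \<in> P.cov q"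
      by (rule P.PA2)
    show "\<And>g g' K K'. g \<in> Gamma V E Q \<Longrightarrow> g' \<in> Gamma V E Q \<Longrightarrow> P.br g = P.br g' \<Longrightarrow>
       relevant E Q g K \<Longrightarrow> relevant E Q g' K' \<Longrightarrow> K \<inter> K' \<inter> Q \<noteq> {} \<Longrightarrow>
       K \<inter> Q \<subseteq> K' \<inter> Q \<or> K' \<inter> Q \<subseteq> K \<inter> Q"
      by (rule P.PA3)
    show "\<And>g. g \<in> Gamma V E Q \<Longrightarrow> \<exists>K. relevant E Q g K \<and> (\<forall>K'. relevant E Q g K' \<longrightarrow> K' \<inter> Q \<subseteq> K \<inter> Q)"
      by (rule P.PA4)
    show "\<And>q. q \<in> Q \<Longrightarrow> finite (P.cov q) \<and> card (P.cov q) \<le> 2"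
      by (rule P.PA5)
  qed
  show "\<not> has_full_antipodal_triangle V E Q \<and> (\<forall>F \<in> F0. \<not> contains_colored_subgraph V E Q F)"
    using A.no_triangle A.no_F0 by blast
qed

end
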